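(* Let $\mathcal V$ be a descent category, $k$ a natural number, $T$ a finite simplicial set and $S\hookrightarrow T$ an $m$-expansion. (i) If $X$ is a $k$-groupoid, then $\mathrm{Map}(T,X)\to\mathrm{Map}(S,X)$ is a cover, and an isomorphism if $m>k$. (ii) If $f:X\to Y$ is a fibration of $k$-groupoids, then $\mathrm{Map}(T,X)\to\mathrm{Map}(S\hookrightarrow T,f)$ is a cover, and an isomorphism if $m>k$.
   Context: A descent category is a small category $\mathcal V$ with a subcategory of morphisms called covers such that: $\mathcal V$ has finite limits; pullbacks of covers are covers; if $f$ and $g\circ f$ are covers then $g$ is a cover. A simplicial space is a simplicial object in $\mathcal V$; for a finite simplicial set $T$, $\mathrm{Map}(T,X)$ is the finite limit representing simplicial maps $T\to X$; $\mathrm{Map}(S\hookrightarrow T,f)=\mathrm{Map}(S,X)\times_{\mathrm{Map}(S,Y)}\mathrm{Map}(T,Y)$. $\Lambda^n_i=\bigcup_{j\ne i}\partial_j\Delta^n$. A $k$-groupoid is a simplicial space with $X_n\to\mathrm{Map}(\Lambda^n_i,X)$ a cover for $n>0$, $0\le i\le n$, and an isomorphism for $n>k$. A fibration is a morphism $f$ with $X_n\to\mathrm{Map}(\Lambda^n_i\hookrightarrow\Delta^n,f)$ a cover for $n>0$, $0\le i\le n$. For $m>0$, $S\hookrightarrow T$ is an $m$-expansion if there is a filtration $S=F_{-1}T\subset F_0T\subset\cdots$ with $T=\bigcup_\ell F_\ell T$, a weakly monotone sequence $n_\ell\ge m$, indices $0\le i_\ell\le n_\ell$, and maps making each $F_\ell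 T$ the pushout of $F_{\ell-1}T\leftarrow\Lambda^{n_\ell}_{i_\ell}\hookrightarrow\Delta^{n_\ell}$. *)

theory Defs
  imports Main
begin

record ('o, 'm) category =
  Obj :: "'o set"
  Mor :: "'m set"
  Dom :: "'m \<Rightarrow> 'o"
  Cod :: "'m \<Rightarrow> 'o"
  Comp :: "'m \<Rightarrow> 'm \<Rightarrow> 'm"   (* Comp C g f = g o f *)
  Idm :: "'o \<Rightarrow> 'm"

definition hom :: "('o, 'm, 'x) category_scheme \<Rightarrow> 'o \<Rightarrow> 'o \<Rightarrow> 'm set" where
  "hom C a b = {f \<in> Mor C. Dom C f = a \<and> Cod C f = b}"

definition is_category :: "('o, 'm, 'x) category_scheme \<Rightarrow> bool" where
  "is_category C \<longleftrightarrow>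
     (\<forall>f \<in> Mor C. Dom C f \<in> Obj C \<and> Cod C f \<in> Obj C) \<and>
     (\<forall>a \<in> Obj C. Idm C a \<in> hom C a a) \<and>
     (\<forall>f \<in> Mor C. \<forall>g \<in> Mor C. Cod C f = Dom C g \<longrightarrow>
         Comp C g f \<in> hom C (Dom C f) (Cod C g)) \<and>
     (\<forall>f \<in> Mor C. Comp C f (Idm C (Dom C f)) = f \<and> Comp C (Idm C (Cod C f)) f = f) \<and>
     (\<forall>f \<in> Mor C. \<forall>g \<in> Mor C. \<forall>h \<in> Mor C.
         Cod C f = Dom C g \<and> Cod C g = Dom C h \<longrightarrow>
         Comp C h (Comp C g f) = Comp C (Comp C h g) f)"

definition is_iso :: "('o, 'm, 'x) category_scheme \<Rightarrow> 'm \<Rightarrow> bool" where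
  "is_iso C f \<longleftrightarrow> f \<in> Mor C \<and>
     (\<exists>g \<in> hom C (Cod C f) (Dom C f).
        Comp C g f = Idm C (Dom C f) \<and> Comp C f g = Idm C (Cod C f))"

text \<open>Functors out of a (finite) index category J (with objects and morphisms coded by nat).\<close>

definition is_functor ::
  "(nat, nat) category \<Rightarrow> ('o, 'm, 'x) category_scheme \<Rightarrow> (nat \<Rightarrow> 'o) \<Rightarrow> (nat \<Rightarrow> 'm) \<Rightarrow> bool" where
  "is_functor J C Do Dm \<longleftrightarrow>
     (\<forall>j \<in> Obj J. Do j \<in> Obj C) \<and>
     (\<forall>u \<in> Mor J. Dm u \<in> hom C (Do (Dom J u)) (Do (Cod J u))) \<and>
     (\<forall>j \<in> Obj J. Dm (Idm J j) = Idm C (Do j)) \<and>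
     (\<forall>u \<in> Mor J. \<forall>v \<in> Mor J. Cod J u = Dom J v \<longrightarrow> Dm (Comp J v u) = Comp C (Dm v) (Dm u))"

definition is_diag_cone ::
  "(nat, nat) category \<Rightarrow> ('o, 'm, 'x) category_scheme \<Rightarrow> (nat \<Rightarrow> 'o) \<Rightarrow> (nat \<Rightarrow> 'm)
     \<Rightarrow> 'o \<Rightarrow> (nat \<Rightarrow> 'm) \<Rightarrow> bool" where
  "is_diag_cone J C Do Dm L lam \<longleftrightarrow> L \<in> Obj C \<and>
     (\<forall>j \<in> Obj J. lam j \<in> hom C L (Do j)) \<and>
     (\<forall>u \<in> Mor J. Comp C (Dm u) (lam (Dom J u)) = lam (Cod J u))"

definition is_diag_limit ::
  "(nat, nat) category \<Rightarrow> ('o, 'm, 'x) category_scheme \<Rightarrow> (nat \<Rightarrow> 'o) \<Rightarrow> (nat \<Rightarrow> 'm)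
     \<Rightarrow> 'o \<Rightarrow> (nat \<Rightarrow> 'm) \<Rightarrow> bool" where
  "is_diag_limit J C Do Dm L lam \<longleftrightarrow> is_diag_cone J C Do Dm L lam \<and>
     (\<forall>U mu. is_diag_cone J C Do Dm U mu \<longrightarrow>
        (\<exists>!v. v \<in> hom C U L \<and> (\<forall>j \<in> Obj J. Comp C (lam j) v = mu j)))"

definition has_finite_limits :: "('o, 'm, 'x) category_scheme \<Rightarrow> bool" where
  "has_finite_limits C \<longleftrightarrow>
     (\<forall>(J :: (nat, nat) category) Do Dm.
        is_category J \<and> finite (Obj J) \<and> finite (Mor J) \<and> is_functor J C Do Dm \<longrightarrow>
        (\<exists>L lam. is_diag_limit J C Do Dm L lam))"

definition is_pullback ::
  "('o, 'm, 'x) category_scheme \<Rightarrow> 'm \<Rightarrow> 'm \<Rightarrow> 'o \<Rightarrow> 'm \<Rightarrow> 'm \<Rightarrow> bool" where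
  "is_pullback C f g P p1 p2 \<longleftrightarrow>
     f \<in> Mor C \<and> g \<in> Mor C \<and> Cod C f = Cod C g \<and> P \<in> Obj C \<and>
     p1 \<in> hom C P (Dom C f) \<and> p2 \<in> hom C P (Dom C g) \<and>
     Comp C f p1 = Comp C g p2 \<and>
     (\<forall>Q q1 q2. Q \<in> Obj C \<and> q1 \<in> hom C Q (Dom C f) \<and> q2 \<in> hom C Q (Dom C g) \<and>
        Comp C f q1 = Comp C g q2 \<longrightarrow>
        (\<exists>!v. v \<in> hom C Q P \<and> Comp C p1 v = q1 \<and> Comp C p2 v = q2))"

definition descent_category :: "('o, 'm, 'x) category_scheme \<Rightarrow> 'm set \<Rightarrow> bool" where
  "descent_category C cov \<longleftrightarrow>
     is_category C \<and> has_finite_limits C \<and>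
     cov \<subseteq> Mor C \<and>
     (\<forall>a \<in> Obj C. Idm C a \<in> cov) \<and>
     (\<forall>f \<in> cov. \<forall>g \<in> cov. Cod C f = Dom C g \<longrightarrow> Comp C g f \<in> cov) \<and>
     (\<forall>f g P p1 p2. f \<in> cov \<and> is_pullback C f g P p1 p2 \<longrightarrow> p2 \<in> cov) \<and>
     (\<forall>f \<in> Mor C. \<forall>g \<in> Mor C. Cod C f = Dom C g \<and> f \<in> cov \<and> Comp C g f \<in> cov \<longrightarrow> g \<in> cov)"

text \<open>A monotone map [m] \<rightarrow> [n] is coded as the list of its values (length m+1, sorted, entries \<le> n).\<close>

definition simp_op :: "nat \<Rightarrow> nat \<Rightarrow> nat list \<Rightarrow> bool" where
  "simp_op m n \<theta> \<longleftrightarrow> length \<theta> = Suc m \<and> sorted \<theta> \<and> (\<forall>j \<in> set \<theta>. j \<le> n)"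

text \<open>Composition: for \<theta> : [m] \<rightarrow> [n] and \<phi> : [l] \<rightarrow> [m], \<theta> o \<phi> : [l] \<rightarrow> [n].\<close>

definition op_comp :: "nat list \<Rightarrow> nat list \<Rightarrow> nat list" where
  "op_comp \<theta> \<phi> = map (\<lambda>j. \<theta> ! j) \<phi>"

record 'a sset =
  Simp :: "nat \<Rightarrow> 'a set"
  Act :: "nat \<Rightarrow> nat list \<Rightarrow> 'a \<Rightarrow> 'a"   (* Act T n \<theta> : T_n \<rightarrow> T_m for \<theta> : [m] \<rightarrow> [n] *)

definition is_sset :: "'a sset \<Rightarrow> bool" where
  "is_sset T \<longleftrightarrow>
     (\<forall>n m \<theta> x. simp_op m n \<theta> \<and> x \<in> Simp T n \<longrightarrow> Act T n \<theta> x \<in> Simp T m) \<and>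
     (\<forall>n x. x \<in> Simp T n \<longrightarrow> Act T n [0..<Suc n] x = x) \<and>
     (\<forall>l m n \<theta> \<phi> x. simp_op m n \<theta> \<and> simp_op l m \<phi> \<and> x \<in> Simp T n \<longrightarrow>
        Act T m \<phi> (Act T n \<theta> x) = Act T n (op_comp \<theta> \<phi>) x)"

definition nondegenerate :: "'a sset \<Rightarrow> nat \<Rightarrow> 'a \<Rightarrow> bool" where
  "nondegenerate T n x \<longleftrightarrow> x \<in> Simp T n \<and>
     \<not> (\<exists>k \<sigma> y. k < n \<and> simp_op n k \<sigma> \<and> set \<sigma> = {0..k} \<and> y \<in> Simp T k \<and> x = Act T k \<sigma> y)"

definition finite_sset :: "'a sset \<Rightarrow> bool" where
  "finite_sset T \<longleftrightarrow> is_sset T \<and> finite {(n, x). nondegenerate T n x}"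

text \<open>Simplicial subsets (the monomorphism S \<hookrightarrow> T is taken to be the inclusion of a subcomplex).\<close>

definition is_subcomplex :: "'a sset \<Rightarrow> (nat \<Rightarrow> 'a set) \<Rightarrow> bool" where
  "is_subcomplex T S \<longleftrightarrow> (\<forall>n. S n \<subseteq> Simp T n) \<and>
     (\<forall>n m \<theta> x. simp_op m n \<theta> \<and> x \<in> S n \<longrightarrow> Act T n \<theta> x \<in> S m)"

abbreviation subsset :: "'a sset \<Rightarrow> (nat \<Rightarrow> 'a set) \<Rightarrow> 'a sset" where
  "subsset T S \<equiv> T\<lparr>Simp := S\<rparr>"

definition Delta :: "nat \<Rightarrow> nat list sset" where
  "Delta n = \<lparr>Simp = (\<lambda>m. {\<theta>. simp_op m n \<theta>}), Act = (\<lambda>k \<phi> xs. op_comp xs \<phi>)\<rparr>"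

text \<open>\<Lambda>^n_i = union of the faces \<partial>_j \<Delta>^n, j \<noteq> i: simplices missing some vertex j \<noteq> i.\<close>

definition horn :: "nat \<Rightarrow> nat \<Rightarrow> nat \<Rightarrow> nat list set" where
  "horn n i m = {\<theta>. simp_op m n \<theta> \<and> (\<exists>j \<le> n. j \<noteq> i \<and> j \<notin> set \<theta>)}"

text \<open>F' (a subcomplex of T) is the pushout of F \<leftarrow> \<Lambda>^n_i \<hookrightarrow> \<Delta>^n along the map
  \<Delta>^n \<rightarrow> T classified by the n-simplex x, with F \<hookrightarrow> F' the inclusion.
  Pushouts of simplicial sets are computed levelwise; since \<Lambda>^n_i \<hookrightarrow> \<Delta>^n is injective
  this means: x maps the horn into F, F'_m = F_m \<union> x(\<Delta>^n_m), and x is injective on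
  \<Delta>^n_m - \<Lambda>^n_i_m with image disjoint from F_m.\<close>

definition horn_pushout ::
  "'a sset \<Rightarrow> (nat \<Rightarrow> 'a set) \<Rightarrow> (nat \<Rightarrow> 'a set) \<Rightarrow> nat \<Rightarrow> nat \<Rightarrow> 'a \<Rightarrow> bool" where
  "horn_pushout T F F' n i x \<longleftrightarrow> x \<in> Simp T n \<and>
     (\<forall>m. \<forall>\<theta> \<in> horn n i m. Act T n \<theta> x \<in> F m) \<and>
     (\<forall>m. F' m = F m \<union> (\<lambda>\<theta>. Act T n \<theta> x) ` {\<theta>. simp_op m n \<theta>}) \<and>
     (\<forall>m. inj_on (\<lambda>\<theta>. Act T n \<theta> x) ({\<theta>. simp_op m n \<theta>} - horn n i m)) \<and>
     (\<forall>m. (\<lambda>\<theta>. Act T n \<theta> x) ` ({\<theta>. simp_op m n \<theta>} - horn n i m) \<inter> F m = {})"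

text \<open>m-expansion: F_{-1} = S is coded as F 0, F_l as F (l+1); the filtration is finite
  (for finite T it necessarily is), ending in T.\<close>

definition m_expansion :: "'a sset \<Rightarrow> nat \<Rightarrow> (nat \<Rightarrow> 'a set) \<Rightarrow> bool" where
  "m_expansion T m S \<longleftrightarrow> 0 < m \<and> is_subcomplex T S \<and>
     (\<exists>L (F :: nat \<Rightarrow> nat \<Rightarrow> 'a set) (nn :: nat \<Rightarrow> nat) (ii :: nat \<Rightarrow> nat) (xs :: nat \<Rightarrow> 'a).
        F 0 = S \<and> F L = Simp T \<and>
        (\<forall>l \<le> L. is_subcomplex T (F l)) \<and>
        (\<forall>l < L. m \<le> nn l \<and> ii l \<le> nn l \<and> (\<forall>l'. l \<le> l' \<and> l' < L \<longrightarrow> nn l \<le> nn l') \<and>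
                 horn_pushout T (F l) (F (Suc l)) (nn l) (ii l) (xs l)))"

record ('o, 'm) sobj =
  Ob :: "nat \<Rightarrow> 'o"
  Opm :: "nat \<Rightarrow> nat list \<Rightarrow> 'm"          (* Opm X n \<theta> : X_n \<rightarrow> X_m for \<theta> : [m] \<rightarrow> [n] *)

definition is_sobj :: "('o, 'm, 'x) category_scheme \<Rightarrow> ('o, 'm) sobj \<Rightarrow> bool" where
  "is_sobj C X \<longleftrightarrow>
     (\<forall>n. Ob X n \<in> Obj C) \<and>
     (\<forall>n m \<theta>. simp_op m n \<theta> \<longrightarrow> Opm X n \<theta> \<in> hom C (Ob X n) (Ob X m)) \<and>
     (\<forall>n. Opm X n [0..<Suc n] = Idm C (Ob X n)) \<and>
     (\<forall>l m n \<theta> \<phi>. simp_op m n \<theta> \<and> simp_op l m \<phi> \<longrightarrow>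
        Comp C (Opm X m \<phi>) (Opm X n \<theta>) = Opm X n (op_comp \<theta> \<phi>))"

definition is_smorph ::
  "('o, 'm, 'x) category_scheme \<Rightarrow> ('o, 'm) sobj \<Rightarrow> ('o, 'm) sobj \<Rightarrow> (nat \<Rightarrow> 'm) \<Rightarrow> bool" where
  "is_smorph C X Y f \<longleftrightarrow> is_sobj C X \<and> is_sobj C Y \<and>
     (\<forall>n. f n \<in> hom C (Ob X n) (Ob Y n)) \<and>
     (\<forall>n m \<theta>. simp_op m n \<theta> \<longrightarrow> Comp C (f m) (Opm X n \<theta>) = Comp C (Opm Y n \<theta>) (f n))"

text \<open>A cone from U over T with values in X: a simplicial map T \<rightarrow> Hom(U, X_\<bullet>).\<close>

definition is_scone ::
  "('o, 'm, 'x) category_scheme \<Rightarrow> 'a sset \<Rightarrow> ('o, 'm) sobj \<Rightarrow> 'o \<Rightarrow> (nat \<Rightarrow> 'a \<Rightarrow> 'm) \<Rightarrow> bool" where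
  "is_scone C T X U d \<longleftrightarrow> U \<in> Obj C \<and>
     (\<forall>n. \<forall>x \<in> Simp T n. d n x \<in> hom C U (Ob X n)) \<and>
     (\<forall>n m \<theta> x. simp_op m n \<theta> \<and> x \<in> Simp T n \<longrightarrow>
        Comp C (Opm X n \<theta>) (d n x) = d m (Act T n \<theta> x))"

text \<open>(L, c) is Map(T, X): the object representing simplicial maps T \<rightarrow> X.\<close>

definition is_Map ::
  "('o, 'm, 'x) category_scheme \<Rightarrow> 'a sset \<Rightarrow> ('o, 'm) sobj \<Rightarrow> 'o \<Rightarrow> (nat \<Rightarrow> 'a \<Rightarrow> 'm) \<Rightarrow> bool" where
  "is_Map C T X L c \<longleftrightarrow> is_scone C T X L c \<and>
     (\<forall>U d. is_scone C T X U d \<longrightarrow>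
        (\<exists>!u. u \<in> hom C U L \<and> (\<forall>n. \<forall>x \<in> Simp T n. Comp C (c n x) u = d n x)))"

text \<open>u : L_T \<rightarrow> L_S is the restriction map Map(T,X) \<rightarrow> Map(S,X) (S \<subseteq> T).\<close>

definition is_restr ::
  "('o, 'm, 'x) category_scheme \<Rightarrow> (nat \<Rightarrow> 'a set) \<Rightarrow> (nat \<Rightarrow> 'a \<Rightarrow> 'm) \<Rightarrow> (nat \<Rightarrow> 'a \<Rightarrow> 'm) \<Rightarrow> 'm \<Rightarrow> bool" where
  "is_restr C S cT cS u \<longleftrightarrow> (\<forall>n. \<forall>x \<in> S n. Comp C (cS n x) u = cT n x)"

text \<open>a : L_X \<rightarrow> L_Y is the map Map(S,X) \<rightarrow> Map(S,Y) induced by f : X \<rightarrow> Y.\<close>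

definition is_push ::
  "('o, 'm, 'x) category_scheme \<Rightarrow> (nat \<Rightarrow> 'a set) \<Rightarrow> (nat \<Rightarrow> 'm) \<Rightarrow> (nat \<Rightarrow> 'a \<Rightarrow> 'm) \<Rightarrow> (nat \<Rightarrow> 'a \<Rightarrow> 'm) \<Rightarrow> 'm \<Rightarrow> bool" where
  "is_push C S f cX cY a \<longleftrightarrow> (\<forall>n. \<forall>x \<in> S n. Comp C (cY n x) a = Comp C (f n) (cX n x))"

text \<open>Given Map(T,X) = (LTX,cTX), Map(S,X) = (LSX,cSX), Map(S,Y) = (LSY,cSY), Map(T,Y) = (LTY,cTY),
  the property Q holds of the canonical map Map(T,X) \<rightarrow> Map(S \<hookrightarrow> T, f), where
  Map(S \<hookrightarrow> T, f) = Map(S,X) \<times>_{Map(S,Y)} Map(T,Y) is any chosen pullback.\<close>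

definition relmap_prop ::
  "('o, 'm, 'x) category_scheme \<Rightarrow> ('m \<Rightarrow> bool) \<Rightarrow> 'a sset \<Rightarrow> (nat \<Rightarrow> 'a set) \<Rightarrow> (nat \<Rightarrow> 'm)
    \<Rightarrow> 'o \<Rightarrow> (nat \<Rightarrow> 'a \<Rightarrow> 'm) \<Rightarrow> 'o \<Rightarrow> (nat \<Rightarrow> 'a \<Rightarrow> 'm)
    \<Rightarrow> 'o \<Rightarrow> (nat \<Rightarrow> 'a \<Rightarrow> 'm) \<Rightarrow> 'o \<Rightarrow> (nat \<Rightarrow> 'a \<Rightarrow> 'm) \<Rightarrow> bool" where
  "relmap_prop C Q T S f LTX cTX LSX cSX LSY cSY LTY cTY \<longleftrightarrow>
     (\<forall>a b P p1 p2 u.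
        a \<in> hom C LSX LSY \<and> is_push C S f cSX cSY a \<and>
        b \<in> hom C LTY LSY \<and> is_restr C S cTY cSY b \<and>
        is_pullback C a b P p1 p2 \<and>
        u \<in> hom C LTX P \<and> is_restr C S cTX cSX (Comp C p1 u) \<and>
        is_push C (Simp T) f cTX cTY (Comp C p2 u)
        \<longrightarrow> Q u)"

definition k_groupoid :: "('o, 'm, 'x) category_scheme \<Rightarrow> 'm set \<Rightarrow> nat \<Rightarrow> ('o, 'm) sobj \<Rightarrow> bool" where
  "k_groupoid C cov k X \<longleftrightarrow> is_sobj C X \<and>
     (\<forall>n i L c u. 0 < n \<and> i \<le> n \<and> is_Map C (subsset (Delta n) (horn n i)) X L c \<and>
        u \<in> hom C (Ob X n) L \<and> is_restr C (horn n i) (\<lambda>m \<theta>. Opm X n \<theta>) c u \<longrightarrow>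
        u \<in> cov \<and> (k < n \<longrightarrow> is_iso C u))"

text \<open>Fibration: X_n \<rightarrow> Map(\<Lambda>^n_i \<hookrightarrow> \<Delta>^n, f) = Map(\<Lambda>^n_i,X) \<times>_{Map(\<Lambda>^n_i,Y)} Y_n is a cover.\<close>

definition fibration ::
  "('o, 'm, 'x) category_scheme \<Rightarrow> 'm set \<Rightarrow> ('o, 'm) sobj \<Rightarrow> ('o, 'm) sobj \<Rightarrow> (nat \<Rightarrow> 'm) \<Rightarrow> bool" where
  "fibration C cov X Y f \<longleftrightarrow> is_smorph C X Y f \<and>
     (\<forall>n i LSX cSX LSY cSY. 0 < n \<and> i \<le> n \<and>
        is_Map C (subsset (Delta n) (horn n i)) X LSX cSX \<and>
        is_Map C (subsset (Delta n) (horn n i)) Y LSY cSY \<longrightarrow>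
        relmap_prop C (\<lambda>u. u \<in> cov) (Delta n) (horn n i) f
          (Ob X n) (\<lambda>m \<theta>. Opm X n \<theta>) LSX cSX LSY cSY (Ob Y n) (\<lambda>m \<theta>. Opm Y n \<theta>))"

end

theory Submission
  imports Defs "HOL-Library.Countable"
begin



section \<open>Category basics\<close>

lemma homI: "f \<in> Mor C \<Longrightarrow> Dom C f = a \<Longrightarrow> Cod C f = b \<Longrightarrow> f \<in> hom C a b"
  by (simp add: hom_def)

lemma homD: "f \<in> hom C a b \<Longrightarrow> f \<in> Mor C \<and> Dom C f = a \<and> Cod C f = b"
  by (simp add: hom_def)

lemma cat_comp:
  assumes "is_category C" "f \<in> hom C a b" "g \<in> hom C b c"
  shows "Comp C g f \<in> hom C a c"
  using assms unfolding is_category_def hom_def by auto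

lemma cat_obj:
  assumes "is_category C" "f \<in> hom C a b"
  shows "a \<in> Obj C" "b \<in> Obj C"
  using assms unfolding is_category_def hom_def by auto

lemma cat_id:
  assumes "is_category C" "a \<in> Obj C"
  shows "Idm C a \<in> hom C a a"
  using assms unfolding is_category_def by auto

lemma cat_idl:
  assumes "is_category C" "f \<in> hom C a b"
  shows "Comp C (Idm C b) f = f"
  using assms unfolding is_category_def hom_def by auto

lemma cat_idr:
  assumes "is_category C" "f \<in> hom C a b"
  shows "Comp C f (Idm C a) = f"
  using assms unfolding is_category_def hom_def by auto

lemma cat_assoc:
  assumes "is_category C" "f \<in> hom C a b" "g \<in> hom C b c" "h \<in> hom C c d"
  shows "Comp C h (Comp C g f) = Comp C (Comp C h g) f"
  using assms unfolding is_category_def hom_def by auto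

lemma iso_inv:
  assumes "is_category C" "is_iso C f" "f \<in> hom C a b"
  obtains g where "g \<in> hom C b a" "Comp C g f = Idm C a" "Comp C f g = Idm C b"
  using assms unfolding is_iso_def hom_def by auto

lemma isoI:
  assumes "f \<in> hom C a b" "g \<in> hom C b a" "Comp C g f = Idm C a" "Comp C f g = Idm C b"
  shows "is_iso C f"
  using assms unfolding is_iso_def hom_def by auto

lemma iso_comp:
  assumes C: "is_category C" and f: "f \<in> hom C a b" and g: "g \<in> hom C b c"
    and "is_iso C f" "is_iso C g"
  shows "is_iso C (Comp C g f)"
proof -
  obtain f' where f': "f' \<in> hom C b a" "Comp C f' f = Idm C a" "Comp C f f' = Idm C b"
    using iso_inv[OF C \<open>is_iso C f\<close> f] by blast
  obtain g' where g': "g' \<in> hom C c b" "Comp C g' g = Idm C b" "Comp C g g' = Idm C c"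
    using iso_inv[OF C \<open>is_iso C g\<close> g] by blast
  have 1: "Comp C (Comp C f' g') (Comp C g f) = Idm C a"
  proof -
    have "Comp C (Comp C f' g') (Comp C g f) = Comp C f' (Comp C g' (Comp C g f))"
      by (metis C cat_assoc cat_comp f f'(1) g g'(1))
    also have "\<dots> = Comp C f' (Comp C (Comp C g' g) f)"
      by (metis C cat_assoc f g g'(1))
    also have "\<dots> = Idm C a" using g'(2) f'(2) cat_idl[OF C f] by simp
    finally show ?thesis .
  qed
  have 2: "Comp C (Comp C g f) (Comp C f' g') = Idm C c"
  proof -
    have "Comp C (Comp C g f) (Comp C f' g') = Comp C g (Comp C f (Comp C f' g'))"
      by (metis C cat_assoc cat_comp f f'(1) g g'(1))
    also have "\<dots> = Comp C g (Comp C (Comp C f f') g')"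
      by (metis C cat_assoc f f'(1) g'(1))
    also have "\<dots> = Idm C c" using g'(3) f'(3) cat_idl[OF C g'(1)] by simp
    finally show ?thesis .
  qed
  show ?thesis
    by (rule isoI[OF cat_comp[OF C f g] cat_comp[OF C g'(1) f'(1)] 1 2])
qed

lemma id_iso: "is_category C \<Longrightarrow> a \<in> Obj C \<Longrightarrow> is_iso C (Idm C a)"
  by (metis cat_id cat_idl isoI)

lemma iso_cancel:
  assumes C: "is_category C" and h: "h \<in> hom C a b" and q: "q \<in> hom C b c"
    and "is_iso C q" "is_iso C (Comp C q h)"
  shows "is_iso C h"
proof -
  obtain q' where q': "q' \<in> hom C c b" "Comp C q' q = Idm C b" "Comp C q q' = Idm C c"
    using iso_inv[OF C \<open>is_iso C q\<close> q] by blast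
  have "is_iso C (Comp C q' (Comp C q h))"
    by (rule iso_comp[OF C cat_comp[OF C h q] q'(1)]) (use assms q' isoI in auto)
  moreover have "Comp C q' (Comp C q h) = h"
    by (metis C cat_assoc cat_idl h q q'(1) q'(2))
  ultimately show ?thesis by simp
qed



definition Jpb :: "(nat, nat) category" where
  "Jpb = \<lparr>Obj = {0,1,2}, Mor = {0,1,2,3,4},
          Dom = (\<lambda>u. if u = 3 then 0 else if u = 4 then 1 else u),
          Cod = (\<lambda>u. if 3 \<le> u then 2 else u),
          Comp = (\<lambda>v u. if v \<le> 2 then u else v), Idm = (\<lambda>j. j)\<rparr>"

lemma Jpb_cat: "is_category Jpb"
  unfolding is_category_def Jpb_def hom_def by auto



lemma pullback_exists:
  assumes C: "is_category C" and L: "has_finite_limits C"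
    and f: "f \<in> Mor C" and g: "g \<in> Mor C" and fg: "Cod C f = Cod C g"
  shows "\<exists>P p1 p2. is_pullback C f g P p1 p2"
proof -
  define Do where "Do = (\<lambda>j::nat. if j = 0 then Dom C f else if j = 1 then Dom C g else Cod C f)"
  define Dm where "Dm = (\<lambda>u::nat. if u = 3 then f else if u = 4 then g else Idm C (Do u))"
  have fh: "f \<in> hom C (Dom C f) (Cod C f)" and gh: "g \<in> hom C (Dom C g) (Cod C f)"
    using f g fg by (auto simp: hom_def)
  have objs: "Dom C f \<in> Obj C" "Dom C g \<in> Obj C" "Cod C f \<in> Obj C"
    using cat_obj[OF C fh] cat_obj[OF C gh] by auto
  have ids: "Idm C (Dom C f) \<in> hom C (Dom C f) (Dom C f)" "Idm C (Dom C g) \<in> hom C (Dom C g) (Dom C g)"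
     "Idm C (Cod C f) \<in> hom C (Cod C f) (Cod C f)" using cat_id[OF C] objs by auto
  have M: "\<And>u. u \<in> Mor Jpb \<longleftrightarrow> u = 0 \<or> u = 1 \<or> u = 2 \<or> u = 3 \<or> u = 4"
    by (auto simp: Jpb_def)
  have O: "\<And>u. u \<in> Obj Jpb \<longleftrightarrow> u = 0 \<or> u = 1 \<or> u = 2"
    by (auto simp: Jpb_def)
  have F: "is_functor Jpb C Do Dm"
    unfolding is_functor_def
  proof (intro conjI ballI allI impI)
    fix j assume "j \<in> Obj Jpb" then show "Do j \<in> Obj C" using objs by (auto simp: O Do_def)
  next
    fix u assume "u \<in> Mor Jpb"
    then show "Dm u \<in> hom C (Do (Dom Jpb u)) (Do (Cod Jpb u))"
      unfolding M by (elim disjE) (simp_all add: Jpb_def Do_def Dm_def fh gh ids)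
  next
    fix j assume "j \<in> Obj Jpb" then show "Dm (Idm Jpb j) = Idm C (Do j)"
      by (auto simp: Jpb_def Dm_def Do_def)
  next
    fix u v assume "u \<in> Mor Jpb" "v \<in> Mor Jpb" "Cod Jpb u = Dom Jpb v"
    then show "Dm (Comp Jpb v u) = Comp C (Dm v) (Dm u)"
      unfolding M
      apply (elim disjE)
      apply (simp_all add: Jpb_def Dm_def Do_def)
      apply (simp_all add: cat_idl[OF C ids(1)] cat_idl[OF C ids(2)] cat_idl[OF C ids(3)]
           cat_idl[OF C fh] cat_idl[OF C gh] cat_idr[OF C fh] cat_idr[OF C gh])
      done
  qed
  have fin: "finite (Obj Jpb)" "finite (Mor Jpb)" by (auto simp: Jpb_def)
  obtain P lam where lim: "is_diag_limit Jpb C Do Dm P lam"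
    using L Jpb_cat F fin unfolding has_finite_limits_def by blast
  have cn: "P \<in> Obj C" "\<forall>j\<in>Obj Jpb. lam j \<in> hom C P (Do j)"
     "\<forall>u\<in>Mor Jpb. Comp C (Dm u) (lam (Dom Jpb u)) = lam (Cod Jpb u)"
    using lim unfolding is_diag_limit_def is_diag_cone_def by auto
  have cone: "lam 0 \<in> hom C P (Dom C f)" "lam 1 \<in> hom C P (Dom C g)"
      "lam 2 \<in> hom C P (Cod C f)"
    "Comp C f (lam 0) = lam 2" "Comp C g (lam 1) = lam 2"
    using cn(2)[rule_format, of 0] cn(2)[rule_format, of 1] cn(2)[rule_format, of 2]
      cn(3)[rule_format, of 3] cn(3)[rule_format, of 4]
    by (simp_all add: O M Do_def Dm_def Jpb_def)
  have "is_pullback C f g P (lam 0) (lam 1)"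
    unfolding is_pullback_def
  proof (intro conjI allI impI)
    show "Comp C f (lam 0) = Comp C g (lam 1)" using cone by simp
  next
    fix Q q1 q2 assume Q: "Q \<in> Obj C \<and> q1 \<in> hom C Q (Dom C f) \<and> q2 \<in> hom C Q (Dom C g) \<and>
        Comp C f q1 = Comp C g q2"
    define mu where "mu = (\<lambda>j::nat. if j = 0 then q1 else if j = 1 then q2 else Comp C f q1)"
    have fq: "Comp C f q1 \<in> hom C Q (Cod C f)" using Q cat_comp[OF C _ fh] by blast
    have "is_diag_cone Jpb C Do Dm Q mu"
      unfolding is_diag_cone_def
    proof (intro conjI ballI)
      show "Q \<in> Obj C" using Q by simp
    next
      fix j assume "j \<in> Obj Jpb" then show "mu j \<in> hom C Q (Do j)"
        using Q fq by (auto simp: O mu_def Do_def)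
    next
      fix u assume "u \<in> Mor Jpb"
      then show "Comp C (Dm u) (mu (Dom Jpb u)) = mu (Cod Jpb u)"
        unfolding M
        apply (elim disjE)
        apply (simp_all add: Jpb_def mu_def Do_def Dm_def)
        using Q fq cat_idl[OF C] by auto
    qed
    then obtain v where v: "v \<in> hom C Q P" "\<forall>j\<in>Obj Jpb. Comp C (lam j) v = mu j"
      and vu: "\<And>w. w \<in> hom C Q P \<and> (\<forall>j\<in>Obj Jpb. Comp C (lam j) w = mu j) \<Longrightarrow> w = v"
      using lim unfolding is_diag_limit_def by metis
    show "\<exists>!v. v \<in> hom C Q P \<and> Comp C (lam 0) v = q1 \<and> Comp C (lam 1) v = q2"
    proof (rule ex1I[of _ v])
      show "v \<in> hom C Q P \<and> Comp C (lam 0) v = q1 \<and> Comp C (lam 1) v = q2"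
        using v by (auto simp: O mu_def)
    next
      fix w assume w: "w \<in> hom C Q P \<and> Comp C (lam 0) w = q1 \<and> Comp C (lam 1) w = q2"
      have "Comp C (lam 2) w = Comp C f q1"
        using w cone(4) cat_assoc[OF C _ cone(1) fh, of w Q] by simp
      then have "\<forall>j\<in>Obj Jpb. Comp C (lam j) w = mu j" using w by (auto simp: O mu_def)
      then show "w = v" using vu w by blast
    qed
  qed (use cone cn f g fg in auto)
  then show ?thesis by blast
qed




lemma ex1_uniq: "\<exists>!x. P x \<Longrightarrow> P a \<Longrightarrow> P b \<Longrightarrow> a = b" by blast

lemma pullback_D:
  assumes "is_pullback C f g P p1 p2"
  shows "f \<in> Mor C" "g \<in> Mor C" "Cod C f = Cod C g" "P \<in> Obj C"
    "p1 \<in> hom C P (Dom C f)" "p2 \<in> hom C P (Dom C g)" "Comp C f p1 = Comp C g p2"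
    "\<And>Q q1 q2. Q \<in> Obj C \<Longrightarrow> q1 \<in> hom C Q (Dom C f) \<Longrightarrow> q2 \<in> hom C Q (Dom C g) \<Longrightarrow>
        Comp C f q1 = Comp C g q2 \<Longrightarrow>
        (\<exists>!v. v \<in> hom C Q P \<and> Comp C p1 v = q1 \<and> Comp C p2 v = q2)"
proof -
  note d = assms[unfolded is_pullback_def]
  show "f \<in> Mor C" "g \<in> Mor C" "Cod C f = Cod C g" "P \<in> Obj C"
    "p1 \<in> hom C P (Dom C f)" "p2 \<in> hom C P (Dom C g)" "Comp C f p1 = Comp C g p2"
    using d by simp_all
  fix Q q1 q2 assume "Q \<in> Obj C" "q1 \<in> hom C Q (Dom C f)" "q2 \<in> hom C Q (Dom C g)"
        "Comp C f q1 = Comp C g q2"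
  then show "\<exists>!v. v \<in> hom C Q P \<and> Comp C p1 v = q1 \<and> Comp C p2 v = q2"
    using d[THEN conjunct2, THEN conjunct2, THEN conjunct2, THEN conjunct2, THEN conjunct2,
       THEN conjunct2, THEN conjunct2] by blast
qed

lemma pullback_comm: "is_pullback C f g P p1 p2 \<Longrightarrow> Comp C f p1 = Comp C g p2"
  using pullback_D(7) .

lemma pullback_ex1:
  assumes "is_pullback C f g P p1 p2" "Q \<in> Obj C" "q1 \<in> hom C Q (Dom C f)" "q2 \<in> hom C Q (Dom C g)"
    "Comp C f q1 = Comp C g q2"
  shows "\<exists>!v. v \<in> hom C Q P \<and> Comp C p1 v = q1 \<and> Comp C p2 v = q2"
  by (rule pullback_D(8)[OF assms])

lemma pullback_univ:
  assumes "is_pullback C f g P p1 p2" "Q \<in> Obj C" "q1 \<in> hom C Q (Dom C f)" "q2 \<in> hom C Q (Dom C g)"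
    "Comp C f q1 = Comp C g q2"
  shows "\<exists>v. v \<in> hom C Q P \<and> Comp C p1 v = q1 \<and> Comp C p2 v = q2"
  using pullback_ex1[OF assms] by (rule ex1_implies_ex)

lemma pullback_uniq:
  assumes C: "is_category C" and pb: "is_pullback C f g P p1 p2" and v: "v \<in> hom C Q P"
    and w: "w \<in> hom C Q P"
    and 1: "Comp C p1 v = Comp C p1 w" and 2: "Comp C p2 v = Comp C p2 w"
  shows "v = w"
proof -
  have h: "p1 \<in> hom C P (Dom C f)" "p2 \<in> hom C P (Dom C g)" "Comp C f p1 = Comp C g p2"
      "f \<in> hom C (Dom C f) (Cod C f)" "g \<in> hom C (Dom C g) (Cod C f)"
    using pullback_D[OF pb] by (auto simp: hom_def)
  have Q: "Q \<in> Obj C" using cat_obj[OF C v] by simp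
  have "Comp C f (Comp C p1 v) = Comp C g (Comp C p2 v)"
    using cat_assoc[OF C v h(1) h(4)] cat_assoc[OF C v h(2) h(5)] h(3) by simp
  then have "\<exists>!u. u \<in> hom C Q P \<and> Comp C p1 u = Comp C p1 v \<and> Comp C p2 u = Comp C p2 v"
    using pullback_ex1[OF pb Q cat_comp[OF C v h(1)] cat_comp[OF C v h(2)]] by simp
  then show ?thesis
    by (rule ex1_uniq) (use v w 1 2 in simp_all)
qed




lemma pullback_cov:
  assumes D: "descent_category C cov" and "f \<in> cov" "is_pullback C f g P p1 p2"
  shows "p2 \<in> cov"
proof -
  have "\<forall>f g P p1 p2. f \<in> cov \<and> is_pullback C f g P p1 p2 \<longrightarrow> p2 \<in> cov"
    using D unfolding descent_category_def by (elim conjE)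
  then show ?thesis using assms by blast
qed

lemma pullbackI:
  assumes "f \<in> Mor C" "g \<in> Mor C" "Cod C f = Cod C g" "P \<in> Obj C"
    "p1 \<in> hom C P (Dom C f)" "p2 \<in> hom C P (Dom C g)" "Comp C f p1 = Comp C g p2"
    "\<And>Q q1 q2. Q \<in> Obj C \<Longrightarrow> q1 \<in> hom C Q (Dom C f) \<Longrightarrow> q2 \<in> hom C Q (Dom C g) \<Longrightarrow>
        Comp C f q1 = Comp C g q2 \<Longrightarrow>
        (\<exists>!v. v \<in> hom C Q P \<and> Comp C p1 v = q1 \<and> Comp C p2 v = q2)"
  shows "is_pullback C f g P p1 p2"
  unfolding is_pullback_def using assms by simp

lemma desc_cat: "descent_category C cov \<Longrightarrow> is_category C"
  unfolding descent_category_def by (elim conjE)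

lemma desc_lim: "descent_category C cov \<Longrightarrow> has_finite_limits C"
  unfolding descent_category_def by (elim conjE)

lemma desc_id: "descent_category C cov \<Longrightarrow> a \<in> Obj C \<Longrightarrow> Idm C a \<in> cov"
proof -
  assume "descent_category C cov" "a \<in> Obj C"
  moreover have "descent_category C cov \<Longrightarrow> \<forall>a \<in> Obj C. Idm C a \<in> cov"
    unfolding descent_category_def by (elim conjE)
  ultimately show ?thesis by blast
qed

lemma iso_cov:
  assumes D: "descent_category C cov" and w: "w \<in> hom C a b" and iw: "is_iso C w"
  shows "w \<in> cov"
proof -
  have C: "is_category C" using D by (rule desc_cat)
  obtain w' where w': "w' \<in> hom C b a" "Comp C w' w = Idm C a" "Comp C w w' = Idm C b"
    using iso_inv[OF C iw w] by blast
  have b: "b \<in> Obj C" and a: "a \<in> Obj C" using cat_obj[OF C w] by auto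
  have ib: "Idm C b \<in> hom C b b" using cat_id[OF C b] .
  have ibd: "Idm C b \<in> Mor C" "Dom C (Idm C b) = b" "Cod C (Idm C b) = b"
    using homD[OF ib] by auto
  have "is_pullback C (Idm C b) (Idm C b) a w w"
  proof (rule pullbackI)
    fix Q q1 q2 assume Q: "Q \<in> Obj C" "q1 \<in> hom C Q (Dom C (Idm C b))"
       "q2 \<in> hom C Q (Dom C (Idm C b))" "Comp C (Idm C b) q1 = Comp C (Idm C b) q2"
    then have q: "q1 \<in> hom C Q b" "q2 \<in> hom C Q b" using ib by (auto simp: hom_def)
    then have qq: "q1 = q2" using Q cat_idl[OF C q(1)] cat_idl[OF C q(2)] by simp
    have e1: "Comp C w (Comp C w' q1) = q1"
      using cat_assoc[OF C q(1) w'(1) w] w'(3) cat_idl[OF C q(1)] by simp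
    show "\<exists>!v. v \<in> hom C Q a \<and> Comp C w v = q1 \<and> Comp C w v = q2"
    proof (rule ex1I[of _ "Comp C w' q1"])
      show "Comp C w' q1 \<in> hom C Q a \<and> Comp C w (Comp C w' q1) = q1 \<and> Comp C w (Comp C w' q1) = q2"
        using cat_comp[OF C q(1) w'(1)] e1 by (simp add: qq[symmetric])
    next
      fix v assume v: "v \<in> hom C Q a \<and> Comp C w v = q1 \<and> Comp C w v = q2"
      then have vh: "v \<in> hom C Q a" by simp
      have "Comp C w' (Comp C w v) = v"
        using cat_assoc[OF C vh w w'(1)] w'(2) cat_idl[OF C vh] by simp
      moreover have "Comp C w v = q1" using v by (elim conjE)
      ultimately show "v = Comp C w' q1" by simp
    qed
  next
    show "Comp C (Idm C b) w = Comp C (Idm C b) w" ..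
  qed (use ibd w a in simp_all)
  moreover have "Idm C b \<in> cov" using D b by (rule desc_id)
  ultimately show ?thesis using pullback_cov[OF D] by simp
qed

lemma cov_comp:
  assumes D: "descent_category C cov" and "f \<in> cov" "g \<in> cov" "f \<in> hom C a b" "g \<in> hom C b c"
  shows "Comp C g f \<in> cov"
proof -
  have "\<forall>f \<in> cov. \<forall>g \<in> cov. Cod C f = Dom C g \<longrightarrow> Comp C g f \<in> cov"
    using D unfolding descent_category_def by (elim conjE)
  then show ?thesis using assms(2-5) by (auto simp: hom_def)
qed


lemma pullback_iso:
  assumes C: "is_category C" and pb: "is_pullback C f g P p1 p2" and fi: "is_iso C f"
  shows "is_iso C p2"
proof -
  have h: "P \<in> Obj C" "p1 \<in> hom C P (Dom C f)" "p2 \<in> hom C P (Dom C g)" "Comp C f p1 = Comp C g p2"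
      "f \<in> hom C (Dom C f) (Cod C f)" "g \<in> hom C (Dom C g) (Cod C f)"
    using pullback_D[OF pb] by (auto simp: hom_def)
  obtain f' where f': "f' \<in> hom C (Cod C f) (Dom C f)" "Comp C f' f = Idm C (Dom C f)"
      "Comp C f f' = Idm C (Cod C f)"
    using iso_inv[OF C fi h(5)] by blast
  have gD: "Dom C g \<in> Obj C" using cat_obj[OF C h(6)] by simp
  have idg: "Idm C (Dom C g) \<in> hom C (Dom C g) (Dom C g)" using cat_id[OF C gD] .
  have q1: "Comp C f' g \<in> hom C (Dom C g) (Dom C f)" using cat_comp[OF C h(6) f'(1)] .
  have "Comp C f (Comp C f' g) = Comp C g (Idm C (Dom C g))"
    using cat_assoc[OF C h(6) f'(1) h(5)] f'(3) cat_idl[OF C h(6)] cat_idr[OF C h(6)] by simp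
  then obtain v where v: "v \<in> hom C (Dom C g) P" "Comp C p1 v = Comp C f' g"
      "Comp C p2 v = Idm C (Dom C g)"
    using pullback_univ[OF pb gD q1 idg] by blast
  have vp: "Comp C v p2 \<in> hom C P P" using cat_comp[OF C h(3) v(1)] .
  have "Comp C v p2 = Idm C P"
  proof (rule pullback_uniq[OF C pb vp cat_id[OF C h(1)]])
    show "Comp C p1 (Comp C v p2) = Comp C p1 (Idm C P)"
    proof -
      have "Comp C p1 (Comp C v p2) = Comp C (Comp C f' g) p2"
        using cat_assoc[OF C h(3) v(1) h(2)] v(2) by simp
      also have "\<dots> = Comp C f' (Comp C g p2)"
        using cat_assoc[OF C h(3) h(6) f'(1)] by simp
      also have "\<dots> = Comp C (Comp C f' f) p1"
        using h(4) cat_assoc[OF C h(2) h(5) f'(1)] by simp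
      also have "\<dots> = p1" using f'(2) cat_idl[OF C h(2)] by simp
      finally show ?thesis using cat_idr[OF C h(2)] by simp
    qed
    show "Comp C p2 (Comp C v p2) = Comp C p2 (Idm C P)"
      using cat_assoc[OF C h(3) v(1) h(3)] v(3) cat_idl[OF C h(3)] cat_idr[OF C h(3)] by simp
  qed
  then show ?thesis using isoI[OF h(3) v(1)] v(3) by blast
qed




section \<open>Simplicial operators\<close>

lemma simp_op_comp:
  assumes "simp_op m n \<theta>" "simp_op k m \<phi>"
  shows "simp_op k n (op_comp \<theta> \<phi>)"
proof -
  have l: "length \<theta> = Suc m" "length \<phi> = Suc k" "sorted \<theta>" "sorted \<phi>"
    "\<forall>j\<in>set \<theta>. j \<le> n" "\<forall>j\<in>set \<phi>. j \<le> m"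
    using assms by (auto simp: simp_op_def)
  have lt: "\<And>j. j < length \<phi> \<Longrightarrow> \<phi> ! j < length \<theta>"
    using l by (metis le_imp_less_Suc nth_mem)
  have "sorted (map (\<lambda>j. \<theta> ! j) \<phi>)"
    unfolding sorted_iff_nth_mono
  proof (intro allI impI)
    fix i j assume ij: "i \<le> j" "j < length (map ((!) \<theta>) \<phi>)"
    then have "\<phi> ! i \<le> \<phi> ! j" using l(4) by (simp add: sorted_iff_nth_mono)
    then show "map ((!) \<theta>) \<phi> ! i \<le> map ((!) \<theta>) \<phi> ! j"
      using ij lt l(3) by (simp add: sorted_iff_nth_mono)
  qed
  moreover have "\<forall>j\<in>set (map (\<lambda>j. \<theta> ! j) \<phi>). j \<le> n"
  proof
    fix j assume "j \<in> set (map (\<lambda>j. \<theta> ! j) \<phi>)"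
    then obtain i where "i < length \<phi>" "j = \<theta> ! (\<phi> ! i)" by (auto simp: in_set_conv_nth)
    then have "j \<in> set \<theta>" using lt by simp
    then show "j \<le> n" using l(5) by blast
  qed
  ultimately show ?thesis using l unfolding simp_op_def op_comp_def by simp
qed

lemma simp_op_id: "simp_op n n [0..<Suc n]"
  unfolding simp_op_def by (simp del: upt_Suc)

lemma simp_op_len: "simp_op m n \<theta> \<Longrightarrow> length \<theta> = Suc m"
  by (simp add: simp_op_def)

lemma op_comp_id: "simp_op m n \<theta> \<Longrightarrow> op_comp \<theta> [0..<Suc m] = \<theta>"
  unfolding op_comp_def simp_op_def by (metis map_nth)

lemma set_op_comp:
  assumes "simp_op m n \<theta>" "simp_op k m \<phi>"
  shows "set (op_comp \<theta> \<phi>) \<subseteq> set \<theta>"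
  using assms unfolding simp_op_def op_comp_def by (auto simp: le_imp_less_Suc)

lemma horn_closed:
  assumes "\<theta> \<in> horn n i m" "simp_op k m \<phi>"
  shows "op_comp \<theta> \<phi> \<in> horn n i k"
  using assms set_op_comp[of m n \<theta> k \<phi>] simp_op_comp[of m n \<theta> k \<phi>]
  unfolding horn_def by blast

lemma horn_sub: "is_subcomplex (Delta n) (horn n i)"
  unfolding is_subcomplex_def Delta_def
proof (intro conjI allI impI)
  fix m show "horn n i m \<subseteq> Simp \<lparr>Simp = \<lambda>m. {\<theta>. simp_op m n \<theta>}, Act = \<lambda>k \<phi> xs. op_comp xs \<phi>\<rparr> m"
    by (auto simp: horn_def)
next
  fix na m \<theta> x assume "simp_op m na \<theta> \<and> x \<in> horn n i na"
  then show "Act \<lparr>Simp = \<lambda>m. {\<theta>. simp_op m n \<theta>}, Act = \<lambda>k \<phi> xs. op_comp xs \<phi>\<rparr> na \<theta> x \<in> horn n i m"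
    using horn_closed[of x n i na m \<theta>] by simp
qed

lemma id_not_horn: "[0..<Suc n] \<notin> horn n i n"
  unfolding horn_def by auto

definition pos :: "nat list \<Rightarrow> nat \<Rightarrow> nat" where
  "pos b v = length (filter (\<lambda>w. w < v) b)"

lemma pos_nth: "sorted b \<Longrightarrow> v \<in> set b \<Longrightarrow> pos b v < length b \<and> b ! pos b v = v"
proof (induction b)
  case Nil then show ?case by simp
next
  case (Cons a b)
  show ?case
  proof (cases "v = a")
    case True
    then have "filter (\<lambda>w. w < v) (a # b) = []" using Cons.prems(1) by (auto simp: filter_empty_conv)
    then show ?thesis using True by (simp add: pos_def)
  next
    case False
    then have v: "v \<in> set b" "a < v" using Cons.prems by auto
    then have "pos (a # b) v = Suc (pos b v)" by (simp add: pos_def)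
    then show ?thesis using Cons.IH v Cons.prems(1) by simp
  qed
qed

lemma pos_mono: "v \<le> v' \<Longrightarrow> pos b v \<le> pos b v'"
  unfolding pos_def by (induction b) auto

lemma pos_nth_distinct:
  "sorted b \<Longrightarrow> distinct b \<Longrightarrow> i < length b \<Longrightarrow> pos b (b ! i) = i"
proof (induction b arbitrary: i)
  case Nil then show ?case by simp
next
  case (Cons a b)
  show ?case
  proof (cases i)
    case 0
    then have "filter (\<lambda>w. w < a) (a # b) = []" using Cons.prems(1) by (auto simp: filter_empty_conv)
    then show ?thesis using 0 by (simp add: pos_def)
  next
    case (Suc j)
    then have j: "j < length b" using Cons.prems by simp
    have "b ! j \<in> set b" using j by simp
    then have "a < b ! j" using Cons.prems(1,2) by (metis distinct.simps(2) order_le_neq_trans sorted_simps(2))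
    then have "pos (a # b) (b ! j) = Suc (pos b (b ! j))" by (simp add: pos_def)
    then show ?thesis using Cons.IH j Cons.prems Suc by simp
  qed
qed

lemma map_pos_simp_op:
  assumes "sorted b" "b \<noteq> []" "set \<theta> \<subseteq> set b" "sorted \<theta>" "length \<theta> = Suc m"
  shows "simp_op m (length b - 1) (map (pos b) \<theta>)" "op_comp b (map (pos b) \<theta>) = \<theta>"
proof -
  have "sorted (map (pos b) \<theta>)"
    using assms(4) by (induction \<theta>) (auto simp: pos_mono)
  moreover have "\<forall>j\<in>set (map (pos b) \<theta>). j \<le> length b - 1"
    using assms pos_nth by fastforce
  ultimately show "simp_op m (length b - 1) (map (pos b) \<theta>)"
    using assms(5) by (simp add: simp_op_def)
  show "op_comp b (map (pos b) \<theta>) = \<theta>"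
  proof -
    have "map (\<lambda>j. b ! j) (map (pos b) \<theta>) = map (\<lambda>v. b ! pos b v) \<theta>" by simp
    also have "\<dots> = \<theta>" by (rule map_idI) (use assms pos_nth in auto)
    finally show ?thesis unfolding op_comp_def .
  qed
qed

lemma map_pos_self:
  assumes "sorted b" "distinct b"
  shows "map (pos b) b = [0..<length b]"
  by (rule nth_equalityI) (simp_all add: pos_nth_distinct assms)

lemma map_pos_comp:
  assumes "sorted b" "sorted a" "set c \<subseteq> set a" "set a \<subseteq> set b"
  shows "op_comp (map (pos b) a) (map (pos a) c) = map (pos b) c"
  unfolding op_comp_def using assms pos_nth
  by (auto intro!: map_cong)




section \<open>Map of a subcomplex of a standard simplex\<close>

lemma Delta_simps [simp]:
  "Simp (subsset (Delta n) K) = K" "Act (subsset (Delta n) K) = (\<lambda>k \<phi> xs. op_comp xs \<phi>)"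
  "Simp (Delta n) m = {\<theta>. simp_op m n \<theta>}"
  by (simp_all add: Delta_def)

lemma subcx_Delta:
  assumes "is_subcomplex (Delta n) K"
  shows "\<And>m \<theta>. \<theta> \<in> K m \<Longrightarrow> simp_op m n \<theta>"
    "\<And>m k \<theta> \<phi>. \<theta> \<in> K m \<Longrightarrow> simp_op k m \<phi> \<Longrightarrow> op_comp \<theta> \<phi> \<in> K k"
  using assms unfolding is_subcomplex_def by (auto simp: Delta_def)

lemma op_comp_map:
  "\<forall>j\<in>set \<phi>. j < length \<theta> \<Longrightarrow> op_comp (map f \<theta>) \<phi> = map f (op_comp \<theta> \<phi>)"
  unfolding op_comp_def by simp

lemma simp_op_lt: "simp_op m n \<theta> \<Longrightarrow> simp_op k m \<phi> \<Longrightarrow> \<forall>j\<in>set \<phi>. j < length \<theta>"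
  unfolding simp_op_def by auto

lemma remdups_face:
  assumes "simp_op m n \<theta>"
  shows "sorted (remdups \<theta>)" "distinct (remdups \<theta>)" "set (remdups \<theta>) = set \<theta>"
    "remdups \<theta> \<noteq> []" "length (remdups \<theta>) = Suc (length (remdups \<theta>) - 1)"
    "simp_op (length (remdups \<theta>) - 1) m (map (pos \<theta>) (remdups \<theta>))"
    "op_comp \<theta> (map (pos \<theta>) (remdups \<theta>)) = remdups \<theta>"
proof -
  have t: "sorted \<theta>" "length \<theta> = Suc m" using assms by (auto simp: simp_op_def)
  then have ne: "\<theta> \<noteq> []" by auto
  show s: "sorted (remdups \<theta>)" "distinct (remdups \<theta>)" "set (remdups \<theta>) = set \<theta>"
    using t by auto
  show ne2: "remdups \<theta> \<noteq> []" using ne by simp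
  show l: "length (remdups \<theta>) = Suc (length (remdups \<theta>) - 1)" using ne2 by (cases "remdups \<theta>") auto
  have "simp_op (length (remdups \<theta>) - 1) (length \<theta> - 1) (map (pos \<theta>) (remdups \<theta>))"
    using map_pos_simp_op(1)[OF t(1) ne _ s(1) l] s(3) by simp
  then show "simp_op (length (remdups \<theta>) - 1) m (map (pos \<theta>) (remdups \<theta>))" using t by simp
  show "op_comp \<theta> (map (pos \<theta>) (remdups \<theta>)) = remdups \<theta>"
    using map_pos_simp_op(2)[OF t(1) ne _ s(1) l] s(3) by simp
qed

definition faces :: "(nat \<Rightarrow> nat list set) \<Rightarrow> nat list set" where
  "faces K = {b. distinct b \<and> b \<in> K (length b - 1)}"

lemma faces_finite:
  assumes "is_subcomplex (Delta n) K"
  shows "finite (faces K)"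
proof -
  have "faces K \<subseteq> {xs. set xs \<subseteq> {0..n} \<and> length xs \<le> Suc n}"
  proof
    fix b assume "b \<in> faces K"
    then have b: "distinct b" "simp_op (length b - 1) n b"
      using subcx_Delta(1)[OF assms] by (auto simp: faces_def)
    then have "set b \<subseteq> {0..n}" by (auto simp: simp_op_def)
    moreover have "length b = card (set b)" using b(1) by (simp add: distinct_card)
    moreover have "card (set b) \<le> card {0..n}" using \<open>set b \<subseteq> {0..n}\<close> by (rule card_mono[rotated]) simp
    ultimately show "b \<in> {xs. set xs \<subseteq> {0..n} \<and> length xs \<le> Suc n}" by simp
  qed
  moreover have "finite {xs. set xs \<subseteq> {0..n::nat} \<and> length xs \<le> Suc n}"
    by (rule finite_lists_length_le) simp
  ultimately show ?thesis by (rule finite_subset)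
qed

lemma remdups_in_faces:
  assumes K: "is_subcomplex (Delta n) K" and "\<theta> \<in> K m"
  shows "remdups \<theta> \<in> faces K"
proof -
  have t: "simp_op m n \<theta>" using subcx_Delta(1)[OF K assms(2)] .
  have "op_comp \<theta> (map (pos \<theta>) (remdups \<theta>)) \<in> K (length (remdups \<theta>) - 1)"
    using subcx_Delta(2)[OF K assms(2) remdups_face(6)[OF t]] .
  then show ?thesis using remdups_face[OF t] by (simp add: faces_def)
qed

lemma faces_D:
  assumes K: "is_subcomplex (Delta n) K" and "b \<in> faces K"
  shows "sorted b" "distinct b" "b \<noteq> []" "length b = Suc (length b - 1)"
    "simp_op (length b - 1) n b" "b \<in> K (length b - 1)" "remdups b = b"
proof -
  show d: "distinct b" and k: "b \<in> K (length b - 1)" using assms(2) by (auto simp: faces_def)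
  show s: "simp_op (length b - 1) n b" using subcx_Delta(1)[OF K k] .
  then show "sorted b" "length b = Suc (length b - 1)" by (auto simp: simp_op_def)
  then show "b \<noteq> []" by auto
  show "remdups b = b" using d by simp
qed

type_synonym pr = "nat list \<times> nat list"

definition JK :: "(nat \<Rightarrow> nat list set) \<Rightarrow> (nat, nat) category" where
  "JK K = \<lparr>Obj = to_nat ` faces K,
     Mor = to_nat ` {(b, a). b \<in> faces K \<and> a \<in> faces K \<and> set a \<subseteq> set b},
     Dom = (\<lambda>u. to_nat (fst (from_nat u :: pr))),
     Cod = (\<lambda>u. to_nat (snd (from_nat u :: pr))),
     Comp = (\<lambda>v u. to_nat (fst (from_nat u :: pr), snd (from_nat v :: pr))),
     Idm = (\<lambda>j. to_nat (from_nat j :: nat list, from_nat j :: nat list))\<rparr>"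

lemma JK_cat: "is_category (JK K)"
  unfolding is_category_def JK_def hom_def by auto

lemma JK_fin: assumes "is_subcomplex (Delta n) K"
  shows "finite (Obj (JK K))" "finite (Mor (JK K))"
proof -
  have f: "finite (faces K)" using faces_finite[OF assms] .
  then show "finite (Obj (JK K))" by (simp add: JK_def)
  have "{(b, a). b \<in> faces K \<and> a \<in> faces K \<and> set a \<subseteq> set b} \<subseteq> faces K \<times> faces K" by auto
  then have "finite {(b, a). b \<in> faces K \<and> a \<in> faces K \<and> set a \<subseteq> set b}"
    using f by (meson finite_SigmaI finite_subset)
  then show "finite (Mor (JK K))" by (simp add: JK_def)
qed




lemma sobj_D:
  assumes "is_sobj C X"
  shows "\<And>n. Ob X n \<in> Obj C"
    "\<And>n m \<theta>. simp_op m n \<theta> \<Longrightarrow> Opm X n \<theta> \<in> hom C (Ob X n) (Ob X m)"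
    "\<And>n. Opm X n [0..<Suc n] = Idm C (Ob X n)"
    "\<And>l m n \<theta> \<phi>. simp_op m n \<theta> \<Longrightarrow> simp_op l m \<phi> \<Longrightarrow>
        Comp C (Opm X m \<phi>) (Opm X n \<theta>) = Opm X n (op_comp \<theta> \<phi>)"
  using assms unfolding is_sobj_def by blast+

definition JDo :: "('o, 'm) sobj \<Rightarrow> nat \<Rightarrow> 'o" where
  "JDo X j = Ob X (length (from_nat j :: nat list) - 1)"

definition JDm :: "('o, 'm) sobj \<Rightarrow> nat \<Rightarrow> 'm" where
  "JDm X u = (case from_nat u :: pr of (b, a) \<Rightarrow> Opm X (length b - 1) (map (pos b) a))"

lemma JK_mor: "u \<in> Mor (JK K) \<longleftrightarrow> (\<exists>b a. u = to_nat (b, a) \<and> b \<in> faces K \<and> a \<in> faces K \<and> set a \<subseteq> set b)"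
  by (auto simp: JK_def)

lemma face_incl_simp_op:
  assumes K: "is_subcomplex (Delta n) K" and b: "b \<in> faces K" and a: "a \<in> faces K"
    and ab: "set a \<subseteq> set b"
  shows "simp_op (length a - 1) (length b - 1) (map (pos b) a)" "op_comp b (map (pos b) a) = a"
  using map_pos_simp_op[OF faces_D(1,3)[OF K b] ab faces_D(1)[OF K a] faces_D(4)[OF K a]] by auto

lemma JK_functor:
  assumes C: "is_category C" and X: "is_sobj C X" and K: "is_subcomplex (Delta n) K"
  shows "is_functor (JK K) C (JDo X) (JDm X)"
  unfolding is_functor_def
proof (intro conjI ballI allI impI)
  fix j assume "j \<in> Obj (JK K)" then show "JDo X j \<in> Obj C" using sobj_D(1)[OF X] by (simp add: JDo_def)
next
  fix u assume "u \<in> Mor (JK K)"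
  then obtain b a where u: "u = to_nat (b, a)" "b \<in> faces K" "a \<in> faces K" "set a \<subseteq> set b"
    unfolding JK_mor by blast
  have "Opm X (length b - 1) (map (pos b) a) \<in> hom C (Ob X (length b - 1)) (Ob X (length a - 1))"
    using sobj_D(2)[OF X face_incl_simp_op(1)[OF K u(2-4)]] .
  then show "JDm X u \<in> hom C (JDo X (Dom (JK K) u)) (JDo X (Cod (JK K) u))"
    using u by (simp add: JDm_def JDo_def JK_def)
next
  fix j assume "j \<in> Obj (JK K)"
  then obtain b where j: "j = to_nat b" "b \<in> faces K" by (auto simp: JK_def)
  have "map (pos b) b = [0..<Suc (length b - 1)]"
    using map_pos_self[OF faces_D(1,2)[OF K j(2)]] faces_D(4)[OF K j(2)] by simp
  then show "JDm X (Idm (JK K) j) = Idm C (JDo X j)"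
    using j sobj_D(3)[OF X] by (simp add: JDm_def JDo_def JK_def)
next
  fix u v assume uv: "u \<in> Mor (JK K)" "v \<in> Mor (JK K)" "Cod (JK K) u = Dom (JK K) v"
  obtain b a where u: "u = to_nat (b, a)" "b \<in> faces K" "a \<in> faces K" "set a \<subseteq> set b"
    using uv(1) unfolding JK_mor by blast
  obtain a' c where v: "v = to_nat (a', c)" "a' \<in> faces K" "c \<in> faces K" "set c \<subseteq> set a'"
    using uv(2) unfolding JK_mor by blast
  have aa: "a' = a" using uv(3) u v by (simp add: JK_def)
  have "Comp C (Opm X (length a - 1) (map (pos a) c)) (Opm X (length b - 1) (map (pos b) a))
      = Opm X (length b - 1) (op_comp (map (pos b) a) (map (pos a) c))"
    using sobj_D(4)[OF X face_incl_simp_op(1)[OF K u(2-4)] face_incl_simp_op(1)[OF K u(3) v(3)]] v(4) aa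
    by simp
  also have "op_comp (map (pos b) a) (map (pos a) c) = map (pos b) c"
    using map_pos_comp[OF faces_D(1)[OF K u(2)] faces_D(1)[OF K u(3)]] v(4) aa u(4) by simp
  finally show "JDm X (Comp (JK K) v u) = Comp C (JDm X v) (JDm X u)"
    using u v aa by (simp add: JDm_def JK_def)
qed




lemma theta_face:
  assumes K: "is_subcomplex (Delta n) K" and t: "\<theta> \<in> K m"
  shows "remdups \<theta> \<in> faces K" "set \<theta> = set (remdups \<theta>)"
    "simp_op m (length (remdups \<theta>) - 1) (map (pos (remdups \<theta>)) \<theta>)"
    "op_comp (remdups \<theta>) (map (pos (remdups \<theta>)) \<theta>) = \<theta>"
proof -
  have s: "simp_op m n \<theta>" using subcx_Delta(1)[OF K t] .
  show f: "remdups \<theta> \<in> faces K" using remdups_in_faces[OF K t] .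
  show "set \<theta> = set (remdups \<theta>)" by simp
  have st: "sorted \<theta>" "length \<theta> = Suc m" using s by (auto simp: simp_op_def)
  note m = map_pos_simp_op[OF faces_D(1,3)[OF K f] _ st(1) st(2)]
  show "simp_op m (length (remdups \<theta>) - 1) (map (pos (remdups \<theta>)) \<theta>)"
      "op_comp (remdups \<theta>) (map (pos (remdups \<theta>)) \<theta>) = \<theta>"
    using m by auto
qed

lemma diag_limit_D:
  assumes "is_diag_limit J C Do Dm L lam"
  shows "L \<in> Obj C" "\<And>j. j \<in> Obj J \<Longrightarrow> lam j \<in> hom C L (Do j)"
    "\<And>u. u \<in> Mor J \<Longrightarrow> Comp C (Dm u) (lam (Dom J u)) = lam (Cod J u)"
    "\<And>U mu. is_diag_cone J C Do Dm U mu \<Longrightarrow>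
        (\<exists>!v. v \<in> hom C U L \<and> (\<forall>j \<in> Obj J. Comp C (lam j) v = mu j))"
  using assms unfolding is_diag_limit_def is_diag_cone_def by blast+

lemma Map_Delta_exists:
  assumes C: "is_category C" and Lim: "has_finite_limits C" and X: "is_sobj C X"
    and K: "is_subcomplex (Delta n) K"
  shows "\<exists>L c. is_Map C (subsset (Delta n) K) X L c"
proof -
  obtain L lam where lim: "is_diag_limit (JK K) C (JDo X) (JDm X) L lam"
    using Lim JK_cat JK_fin[OF K] JK_functor[OF C X K] unfolding has_finite_limits_def by blast
  note LD = diag_limit_D[OF lim]
  define c where "c = (\<lambda>(m::nat) \<theta>. Comp C (Opm X (length (remdups \<theta>) - 1) (map (pos (remdups \<theta>)) \<theta>))
       (lam (to_nat (remdups \<theta>))))"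
  have lamb: "lam (to_nat b) \<in> hom C L (Ob X (length b - 1))" if "b \<in> faces K" for b
    using LD(2)[of "to_nat b"] that by (simp add: JK_def JDo_def)
  have lamab: "Comp C (Opm X (length b - 1) (map (pos b) a)) (lam (to_nat b)) = lam (to_nat a)"
    if "b \<in> faces K" "a \<in> faces K" "set a \<subseteq> set b" for a b
    using LD(3)[of "to_nat (b, a)"] that by (simp add: JK_def JDm_def)
  have ch: "c m \<theta> \<in> hom C L (Ob X m)" if "\<theta> \<in> K m" for m \<theta>
    unfolding c_def
    by (rule cat_comp[OF C lamb[OF theta_face(1)[OF K that]] sobj_D(2)[OF X theta_face(3)[OF K that]]])
  have cface: "c (length b - 1) b = lam (to_nat b)" if "b \<in> faces K" for b
  proof -
    have "map (pos b) b = [0..<Suc (length b - 1)]"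
      using map_pos_self[OF faces_D(1,2)[OF K that]] faces_D(4)[OF K that] by simp
    then show ?thesis unfolding c_def faces_D(7)[OF K that]
      using sobj_D(3)[OF X] cat_idl[OF C lamb[OF that]] by (simp del: upt_Suc)
  qed
  have scone: "is_scone C (subsset (Delta n) K) X L c"
    unfolding is_scone_def
  proof (intro conjI allI impI ballI)
    show "L \<in> Obj C" using LD(1) .
  next
    fix m \<theta> assume "\<theta> \<in> Simp (subsset (Delta n) K) m"
    then show "c m \<theta> \<in> hom C L (Ob X m)" using ch by simp
  next
    fix m k \<phi> \<theta> assume a: "simp_op k m \<phi> \<and> \<theta> \<in> Simp (subsset (Delta n) K) m"
    then have t: "\<theta> \<in> K m" and p: "simp_op k m \<phi>" by auto
    define \<theta>' where "\<theta>' = op_comp \<theta> \<phi>"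
    have t': "\<theta>' \<in> K k" using subcx_Delta(2)[OF K t p] by (simp add: \<theta>'_def)
    define b where "b = remdups \<theta>"
    define b' where "b' = remdups \<theta>'"
    have fb: "b \<in> faces K" and fb': "b' \<in> faces K" using theta_face(1)[OF K t] theta_face(1)[OF K t']
      by (auto simp: b_def b'_def)
    have sub: "set b' \<subseteq> set b"
      using set_op_comp[OF subcx_Delta(1)[OF K t] p] by (simp add: b_def b'_def \<theta>'_def)
    have sp: "simp_op m (length b - 1) (map (pos b) \<theta>)" using theta_face(3)[OF K t] by (simp add: b_def)
    have sp': "simp_op k (length b' - 1) (map (pos b') \<theta>')" using theta_face(3)[OF K t'] by (simp add: b'_def)
    have spb: "simp_op (length b' - 1) (length b - 1) (map (pos b) b')"
      using face_incl_simp_op(1)[OF K fb fb' sub] .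
    have lb: "lam (to_nat b) \<in> hom C L (Ob X (length b - 1))" using lamb[OF fb] .
    have o1: "Opm X (length b - 1) (map (pos b) \<theta>) \<in> hom C (Ob X (length b - 1)) (Ob X m)"
      using sobj_D(2)[OF X sp] .
    have o2: "Opm X m \<phi> \<in> hom C (Ob X m) (Ob X k)" using sobj_D(2)[OF X p] .
    have o3: "Opm X (length b - 1) (map (pos b) b') \<in> hom C (Ob X (length b - 1)) (Ob X (length b' - 1))"
      using sobj_D(2)[OF X spb] .
    have o4: "Opm X (length b' - 1) (map (pos b') \<theta>') \<in> hom C (Ob X (length b' - 1)) (Ob X k)"
      using sobj_D(2)[OF X sp'] .
    have "Comp C (Opm X m \<phi>) (c m \<theta>) = Comp C (Comp C (Opm X m \<phi>) (Opm X (length b - 1) (map (pos b) \<theta>))) (lam (to_nat b))"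
      unfolding c_def b_def[symmetric] using cat_assoc[OF C lb o1 o2] by simp
    also have "\<dots> = Comp C (Opm X (length b - 1) (op_comp (map (pos b) \<theta>) \<phi>)) (lam (to_nat b))"
      using sobj_D(4)[OF X sp p] by simp
    also have "op_comp (map (pos b) \<theta>) \<phi> = map (pos b) \<theta>'"
      unfolding \<theta>'_def by (rule op_comp_map[OF simp_op_lt[OF subcx_Delta(1)[OF K t] p]])
    also have "map (pos b) \<theta>' = op_comp (map (pos b) b') (map (pos b') \<theta>')"
      using map_pos_comp[OF faces_D(1)[OF K fb] faces_D(1)[OF K fb'] _ sub] by (simp add: b'_def)
    also have "Opm X (length b - 1) (op_comp (map (pos b) b') (map (pos b') \<theta>')) =
        Comp C (Opm X (length b' - 1) (map (pos b') \<theta>')) (Opm X (length b - 1) (map (pos b) b'))"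
      using sobj_D(4)[OF X spb sp'] by simp
    also have "Comp C (Comp C (Opm X (length b' - 1) (map (pos b') \<theta>')) (Opm X (length b - 1) (map (pos b) b'))) (lam (to_nat b))
        = Comp C (Opm X (length b' - 1) (map (pos b') \<theta>')) (Comp C (Opm X (length b - 1) (map (pos b) b')) (lam (to_nat b)))"
      using cat_assoc[OF C lb o3 o4] by simp
    also have "Comp C (Opm X (length b - 1) (map (pos b) b')) (lam (to_nat b)) = lam (to_nat b')"
      using lamab[OF fb fb' sub] .
    also have "Comp C (Opm X (length b' - 1) (map (pos b') \<theta>')) (lam (to_nat b')) = c k \<theta>'"
      unfolding c_def b'_def ..
    finally show "Comp C (Opm X m \<phi>) (c m \<theta>) = c k (Act (subsset (Delta n) K) m \<phi> \<theta>)"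
      by (simp add: \<theta>'_def)
  qed
  have "is_Map C (subsset (Delta n) K) X L c"
    unfolding is_Map_def
  proof (intro conjI allI impI)
    show "is_scone C (subsset (Delta n) K) X L c" using scone .
  next
    fix U d assume d: "is_scone C (subsset (Delta n) K) X U d"
    have dh: "\<And>m \<theta>. \<theta> \<in> K m \<Longrightarrow> d m \<theta> \<in> hom C U (Ob X m)" and U: "U \<in> Obj C"
      and dc: "\<And>m k \<phi> \<theta>. simp_op k m \<phi> \<Longrightarrow> \<theta> \<in> K m \<Longrightarrow> Comp C (Opm X m \<phi>) (d m \<theta>) = d k (op_comp \<theta> \<phi>)"
      using d unfolding is_scone_def by auto
    define mu where "mu = (\<lambda>j. d (length (from_nat j :: nat list) - 1) (from_nat j :: nat list))"
    have cone: "is_diag_cone (JK K) C (JDo X) (JDm X) U mu"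
      unfolding is_diag_cone_def
    proof (intro conjI ballI)
      show "U \<in> Obj C" using U .
    next
      fix j assume "j \<in> Obj (JK K)"
      then obtain b where j: "j = to_nat b" "b \<in> faces K" by (auto simp: JK_def)
      then show "mu j \<in> hom C U (JDo X j)" using dh[OF faces_D(6)[OF K j(2)]] by (simp add: mu_def JDo_def)
    next
      fix u assume "u \<in> Mor (JK K)"
      then obtain b a where u: "u = to_nat (b, a)" "b \<in> faces K" "a \<in> faces K" "set a \<subseteq> set b"
        unfolding JK_mor by blast
      have "Comp C (Opm X (length b - 1) (map (pos b) a)) (d (length b - 1) b) = d (length a - 1) a"
        using dc[OF face_incl_simp_op(1)[OF K u(2-4)] faces_D(6)[OF K u(2)]] face_incl_simp_op(2)[OF K u(2-4)]
        by simp
      then show "Comp C (JDm X u) (mu (Dom (JK K) u)) = mu (Cod (JK K) u)"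
        using u by (simp add: JDm_def JK_def mu_def)
    qed
    obtain v where v: "v \<in> hom C U L" "\<forall>j \<in> Obj (JK K). Comp C (lam j) v = mu j"
      using ex1_implies_ex[OF LD(4)[OF cone]] by blast
    have vu: "w = v" if "w \<in> hom C U L" "\<forall>j \<in> Obj (JK K). Comp C (lam j) w = mu j" for w
      by (rule ex1_uniq[OF LD(4)[OF cone]]) (use that v in simp_all)
    show "\<exists>!u. u \<in> hom C U L \<and> (\<forall>m. \<forall>x\<in>Simp (subsset (Delta n) K) m. Comp C (c m x) u = d m x)"
    proof (rule ex1I[of _ v])
      have "Comp C (c m \<theta>) v = d m \<theta>" if t: "\<theta> \<in> K m" for m \<theta>
      proof -
        define b where "b = remdups \<theta>"
        have fb: "b \<in> faces K" using theta_face(1)[OF K t] by (simp add: b_def)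
        have sp: "simp_op m (length b - 1) (map (pos b) \<theta>)" using theta_face(3)[OF K t] by (simp add: b_def)
        have "Comp C (c m \<theta>) v = Comp C (Opm X (length b - 1) (map (pos b) \<theta>)) (Comp C (lam (to_nat b)) v)"
          unfolding c_def b_def[symmetric] using cat_assoc[OF C v(1) lamb[OF fb] sobj_D(2)[OF X sp]] by simp
        also have "Comp C (lam (to_nat b)) v = d (length b - 1) b"
          using v(2) fb by (auto simp: JK_def mu_def)
        also have "Comp C (Opm X (length b - 1) (map (pos b) \<theta>)) (d (length b - 1) b) = d m \<theta>"
          using dc[OF sp faces_D(6)[OF K fb]] theta_face(4)[OF K t] by (simp add: b_def)
        finally show ?thesis .
      qed
      then show "v \<in> hom C U L \<and> (\<forall>m. \<forall>x\<in>Simp (subsset (Delta n) K) m. Comp C (c m x) v = d m x)"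
        using v(1) by simp
    next
      fix w assume w: "w \<in> hom C U L \<and> (\<forall>m. \<forall>x\<in>Simp (subsset (Delta n) K) m. Comp C (c m x) w = d m x)"
      have "\<forall>j \<in> Obj (JK K). Comp C (lam j) w = mu j"
      proof
        fix j assume "j \<in> Obj (JK K)"
        then obtain b where j: "j = to_nat b" "b \<in> faces K" by (auto simp: JK_def)
        have "Comp C (c (length b - 1) b) w = d (length b - 1) b"
          using w faces_D(6)[OF K j(2)] by simp
        then show "Comp C (lam j) w = mu j" using cface[OF j(2)] j by (simp add: mu_def)
      qed
      then show "w = v" using vu w by simp
    qed
  qed
  then show ?thesis by blast
qed




lemma scone_D:
  assumes "is_scone C T X U d"
  shows "U \<in> Obj C" "\<And>n x. x \<in> Simp T n \<Longrightarrow> d n x \<in> hom C U (Ob X n)"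
    "\<And>n m \<theta> x. simp_op m n \<theta> \<Longrightarrow> x \<in> Simp T n \<Longrightarrow> Comp C (Opm X n \<theta>) (d n x) = d m (Act T n \<theta> x)"
  using assms unfolding is_scone_def by blast+

lemma sconeI:
  assumes "U \<in> Obj C" "\<And>n x. x \<in> Simp T n \<Longrightarrow> d n x \<in> hom C U (Ob X n)"
    "\<And>n m \<theta> x. simp_op m n \<theta> \<Longrightarrow> x \<in> Simp T n \<Longrightarrow> Comp C (Opm X n \<theta>) (d n x) = d m (Act T n \<theta> x)"
  shows "is_scone C T X U d"
  using assms unfolding is_scone_def by blast

lemma scone_comp:
  assumes C: "is_category C" and X: "is_sobj C X" and d: "is_scone C T X L c" and v: "v \<in> hom C U L"
  shows "is_scone C T X U (\<lambda>m y. Comp C (c m y) v)"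
proof (rule sconeI)
  show "U \<in> Obj C" using cat_obj[OF C v] by simp
  fix n x assume x: "x \<in> Simp T n"
  show "Comp C (c n x) v \<in> hom C U (Ob X n)" using cat_comp[OF C v scone_D(2)[OF d x]] .
  fix m \<theta> assume t: "simp_op m n \<theta>"
  show "Comp C (Opm X n \<theta>) (Comp C (c n x) v) = Comp C (c m (Act T n \<theta> x)) v"
    using cat_assoc[OF C v scone_D(2)[OF d x] sobj_D(2)[OF X t]] scone_D(3)[OF d t x] by simp
qed

lemma scone_mono:
  assumes "is_scone C (subsset T F) X U d" "is_subcomplex T G" "\<And>n. G n \<subseteq> F n"
  shows "is_scone C (subsset T G) X U d"
proof (rule sconeI)
  show "U \<in> Obj C" using scone_D(1)[OF assms(1)] .
  fix n x assume x: "x \<in> Simp (subsset T G) n"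
  then have xF: "x \<in> Simp (subsset T F) n" using assms(3) by auto
  show "d n x \<in> hom C U (Ob X n)" using scone_D(2)[OF assms(1) xF] .
  fix m \<theta> assume "simp_op m n \<theta>"
  then show "Comp C (Opm X n \<theta>) (d n x) = d m (Act (subsset T G) n \<theta> x)"
    using scone_D(3)[OF assms(1) _ xF] by simp
qed

lemma subsset_self [simp]: "subsset T (Simp T) = T"
  by simp

lemma Map_D1: "is_Map C T X L c \<Longrightarrow> is_scone C T X L c"
  unfolding is_Map_def by (rule conjunct1)

lemma Map_D2: "is_Map C T X L c \<Longrightarrow> is_scone C T X U d \<Longrightarrow>
        (\<exists>!u. u \<in> hom C U L \<and> (\<forall>n. \<forall>x \<in> Simp T n. Comp C (c n x) u = d n x))"
  unfolding is_Map_def by (drule conjunct2) (erule allE, erule allE, erule mp)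

lemmas Map_D = Map_D1 Map_D2

lemma Map_ex:
  assumes "is_Map C T X L c" "is_scone C T X U d"
  obtains u where "u \<in> hom C U L" "\<And>n x. x \<in> Simp T n \<Longrightarrow> Comp C (c n x) u = d n x"
  using ex1_implies_ex[OF Map_D(2)[OF assms]] by blast

lemma Map_uniq:
  assumes C: "is_category C" and X: "is_sobj C X" and M: "is_Map C T X L c"
    and v: "v \<in> hom C U L" and w: "w \<in> hom C U L"
    and e: "\<And>n x. x \<in> Simp T n \<Longrightarrow> Comp C (c n x) v = Comp C (c n x) w"
  shows "v = w"
proof -
  have s: "is_scone C T X U (\<lambda>m y. Comp C (c m y) v)" using scone_comp[OF C X Map_D(1)[OF M] v] .
  show ?thesis
    by (rule ex1_uniq[OF Map_D(2)[OF M s]]) (use v w e in auto)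
qed

lemma Map_iso:
  assumes C: "is_category C" and X: "is_sobj C X" and M: "is_Map C T X L c" and M': "is_Map C T X L' c'"
    and w: "w \<in> hom C L L'" and e: "\<And>n x. x \<in> Simp T n \<Longrightarrow> Comp C (c' n x) w = c n x"
  shows "is_iso C w"
proof -
  obtain w' where w': "w' \<in> hom C L' L" "\<And>n x. x \<in> Simp T n \<Longrightarrow> Comp C (c n x) w' = c' n x"
    using Map_ex[OF M Map_D(1)[OF M']] by blast
  have L: "L \<in> Obj C" and L': "L' \<in> Obj C" using cat_obj[OF C w] by auto
  have ch: "\<And>n x. x \<in> Simp T n \<Longrightarrow> c n x \<in> hom C L (Ob X n)" using scone_D(2)[OF Map_D(1)[OF M]] .
  have ch': "\<And>n x. x \<in> Simp T n \<Longrightarrow> c' n x \<in> hom C L' (Ob X n)" using scone_D(2)[OF Map_D(1)[OF M']] .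
  have 1: "Comp C w' w = Idm C L"
  proof (rule Map_uniq[OF C X M cat_comp[OF C w w'(1)] cat_id[OF C L]])
    fix n x assume x: "x \<in> Simp T n"
    show "Comp C (c n x) (Comp C w' w) = Comp C (c n x) (Idm C L)"
      using cat_assoc[OF C w w'(1) ch[OF x]] w'(2)[OF x] e[OF x] cat_idr[OF C ch[OF x]] by simp
  qed
  have 2: "Comp C w w' = Idm C L'"
  proof (rule Map_uniq[OF C X M' cat_comp[OF C w'(1) w] cat_id[OF C L']])
    fix n x assume x: "x \<in> Simp T n"
    show "Comp C (c' n x) (Comp C w w') = Comp C (c' n x) (Idm C L')"
      using cat_assoc[OF C w'(1) w ch'[OF x]] w'(2)[OF x] e[OF x] cat_idr[OF C ch'[OF x]] by simp
  qed
  show ?thesis by (rule isoI[OF w w'(1) 1 2])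
qed

lemma sset_D:
  assumes "is_sset T"
  shows "\<And>n m \<theta> x. simp_op m n \<theta> \<Longrightarrow> x \<in> Simp T n \<Longrightarrow> Act T n \<theta> x \<in> Simp T m"
    "\<And>n x. x \<in> Simp T n \<Longrightarrow> Act T n [0..<Suc n] x = x"
    "\<And>l m n \<theta> \<phi> x. simp_op m n \<theta> \<Longrightarrow> simp_op l m \<phi> \<Longrightarrow> x \<in> Simp T n \<Longrightarrow>
        Act T m \<phi> (Act T n \<theta> x) = Act T n (op_comp \<theta> \<phi>) x"
  using assms unfolding is_sset_def by blast+

lemma subcx_D:
  assumes "is_subcomplex T F"
  shows "\<And>n. F n \<subseteq> Simp T n" "\<And>n m \<theta> x. simp_op m n \<theta> \<Longrightarrow> x \<in> F n \<Longrightarrow> Act T n \<theta> x \<in> F m"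
  using assms unfolding is_subcomplex_def by blast+

lemma hp_D:
  assumes "horn_pushout T F F' n i x"
  shows "x \<in> Simp T n" "\<And>m \<theta>. \<theta> \<in> horn n i m \<Longrightarrow> Act T n \<theta> x \<in> F m"
    "\<And>m. F' m = F m \<union> (\<lambda>\<theta>. Act T n \<theta> x) ` {\<theta>. simp_op m n \<theta>}"
    "\<And>m. inj_on (\<lambda>\<theta>. Act T n \<theta> x) ({\<theta>. simp_op m n \<theta>} - horn n i m)"
    "\<And>m \<theta>. simp_op m n \<theta> \<Longrightarrow> \<theta> \<notin> horn n i m \<Longrightarrow> Act T n \<theta> x \<notin> F m"
  using assms unfolding horn_pushout_def by blast+

section \<open>Gluing scones along a horn pushout\<close>

definition glue ::
  "('o, 'm, 'x) category_scheme \<Rightarrow> ('o, 'm) sobj \<Rightarrow> 'a sset \<Rightarrow> (nat \<Rightarrow> 'a set) \<Rightarrow> nat \<Rightarrow> nat \<Rightarrow> 'a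
    \<Rightarrow> (nat \<Rightarrow> 'a \<Rightarrow> 'm) \<Rightarrow> 'm \<Rightarrow> nat \<Rightarrow> 'a \<Rightarrow> 'm" where
  "glue C X T F n i x d g m y = (if y \<in> F m then d m y else
     Comp C (Opm X n (SOME \<theta>. simp_op m n \<theta> \<and> \<theta> \<notin> horn n i m \<and> Act T n \<theta> x = y)) g)"

lemma glue_F: "y \<in> F m \<Longrightarrow> glue C X T F n i x d g m y = d m y"
  by (simp add: glue_def)

lemma glue_act:
  assumes hp: "horn_pushout T F F' n i x" and t: "simp_op m n \<theta>"
    and hg: "\<And>m \<theta>. \<theta> \<in> horn n i m \<Longrightarrow> Comp C (Opm X n \<theta>) g = d m (Act T n \<theta> x)"
  shows "glue C X T F n i x d g m (Act T n \<theta> x) = Comp C (Opm X n \<theta>) g"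
proof (cases "\<theta> \<in> horn n i m")
  case True
  then show ?thesis using hp_D(2)[OF hp True] hg[OF True] by (simp add: glue_def)
next
  case False
  have nF: "Act T n \<theta> x \<notin> F m" using hp_D(5)[OF hp t False] .
  define P where "P = (\<lambda>\<theta>'. simp_op m n \<theta>' \<and> \<theta>' \<notin> horn n i m \<and> Act T n \<theta>' x = Act T n \<theta> x)"
  have "P \<theta>" using t False by (simp add: P_def)
  then have "P (SOME \<theta>'. P \<theta>')" by (rule someI)
  then have "(SOME \<theta>'. P \<theta>') = \<theta>"
    using inj_onD[OF hp_D(4)[OF hp, of m], of "SOME \<theta>'. P \<theta>'" \<theta>] t False by (simp add: P_def)
  then show ?thesis using nF by (simp add: glue_def P_def)
qed

lemma F'_cases:
  assumes hp: "horn_pushout T F F' n i x" and "y \<in> F' m"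
  shows "y \<in> F m \<or> (\<exists>\<theta>. simp_op m n \<theta> \<and> y = Act T n \<theta> x)"
proof -
  have "y \<in> F m \<union> (\<lambda>\<theta>. Act T n \<theta> x) ` {\<theta>. simp_op m n \<theta>}"
    using assms(2) hp_D(3)[OF hp, of m] by simp
  then show ?thesis by blast
qed

lemma F_sub_F': assumes "horn_pushout T F F' n i x" shows "F m \<subseteq> F' m"
  using hp_D(3)[OF assms, of m] by simp

lemma x_in_F': assumes T: "is_sset T" and hp: "horn_pushout T F F' n i x"
  shows "x \<in> F' n" "Act T n [0..<Suc n] x = x"
proof -
  show e: "Act T n [0..<Suc n] x = x" using sset_D(2)[OF T hp_D(1)[OF hp]] .
  have "Act T n [0..<Suc n] x \<in> F' n" using hp_D(3)[OF hp, of n] simp_op_id[of n] by blast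
  then show "x \<in> F' n" using e by simp
qed

lemma F'_subcx:
  assumes T: "is_sset T" and F: "is_subcomplex T F" and hp: "horn_pushout T F F' n i x"
  shows "is_subcomplex T F'"
  unfolding is_subcomplex_def
proof (intro conjI allI impI)
  fix m show "F' m \<subseteq> Simp T m"
    using hp_D(3)[OF hp, of m] subcx_D(1)[OF F, of m] sset_D(1)[OF T _ hp_D(1)[OF hp]] by auto
next
  fix k m \<phi> y assume a: "simp_op m k \<phi> \<and> y \<in> F' k"
  then have p: "simp_op m k \<phi>" and y: "y \<in> F' k" by auto
  show "Act T k \<phi> y \<in> F' m"
  proof (cases "y \<in> F k")
    case True then show ?thesis using subcx_D(2)[OF F p True] F_sub_F'[OF hp] by blast
  next
    case False
    then obtain \<theta> where t: "simp_op k n \<theta>" "y = Act T n \<theta> x" using F'_cases[OF hp y] by blast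
    then have "Act T k \<phi> y = Act T n (op_comp \<theta> \<phi>) x" using sset_D(3)[OF T t(1) p hp_D(1)[OF hp]] by simp
    then show ?thesis using hp_D(3)[OF hp, of m] simp_op_comp[OF t(1) p] by blast
  qed
qed

lemma glue_scone:
  assumes C: "is_category C" and X: "is_sobj C X" and T: "is_sset T" and F: "is_subcomplex T F"
    and hp: "horn_pushout T F F' n i x"
    and d: "is_scone C (subsset T F) X U d" and g: "g \<in> hom C U (Ob X n)"
    and hg: "\<And>m \<theta>. \<theta> \<in> horn n i m \<Longrightarrow> Comp C (Opm X n \<theta>) g = d m (Act T n \<theta> x)"
  shows "is_scone C (subsset T F') X U (glue C X T F n i x d g)"
proof (rule sconeI)
  show "U \<in> Obj C" using scone_D(1)[OF d] .
next
  fix m y assume "y \<in> Simp (subsset T F') m"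
  then have y: "y \<in> F' m" by simp
  show "glue C X T F n i x d g m y \<in> hom C U (Ob X m)"
  proof (cases "y \<in> F m")
    case True then show ?thesis using scone_D(2)[OF d, of y m] by (simp add: glue_F)
  next
    case False
    then obtain \<theta> where t: "simp_op m n \<theta>" "y = Act T n \<theta> x" using F'_cases[OF hp y] by blast
    then show ?thesis using glue_act[OF hp t(1) hg] cat_comp[OF C g sobj_D(2)[OF X t(1)]] by simp
  qed
next
  fix m k \<phi> y assume p: "simp_op k m \<phi>" and "y \<in> Simp (subsset T F') m"
  then have y: "y \<in> F' m" by simp
  show "Comp C (Opm X m \<phi>) (glue C X T F n i x d g m y) = glue C X T F n i x d g k (Act (subsset T F') m \<phi> y)"
  proof (cases "y \<in> F m")
    case True
    then have "Act T m \<phi> y \<in> F k" using subcx_D(2)[OF F p] by blast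
    then show ?thesis using True scone_D(3)[OF d p, of y] by (simp add: glue_F)
  next
    case False
    then obtain \<theta> where t: "simp_op m n \<theta>" "y = Act T n \<theta> x" using F'_cases[OF hp y] by blast
    have a: "Act T m \<phi> y = Act T n (op_comp \<theta> \<phi>) x" using sset_D(3)[OF T t(1) p hp_D(1)[OF hp]] t(2) by simp
    have "Comp C (Opm X m \<phi>) (glue C X T F n i x d g m y) = Comp C (Opm X m \<phi>) (Comp C (Opm X n \<theta>) g)"
      using glue_act[OF hp t(1) hg] t(2) by simp
    also have "\<dots> = Comp C (Opm X n (op_comp \<theta> \<phi>)) g"
      using cat_assoc[OF C g sobj_D(2)[OF X t(1)] sobj_D(2)[OF X p]] sobj_D(4)[OF X t(1) p] by simp
    also have "\<dots> = glue C X T F n i x d g k (Act (subsset T F') m \<phi> y)"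
      using glue_act[OF hp simp_op_comp[OF t(1) p] hg] a by simp
    finally show ?thesis .
  qed
qed

lemma act_scone:
  assumes T: "is_sset T" and e: "is_scone C (subsset T G) X U e" and x: "x \<in> Simp T n"
    and K: "is_subcomplex (Delta n) K" and KG: "\<And>m \<theta>. \<theta> \<in> K m \<Longrightarrow> Act T n \<theta> x \<in> G m"
  shows "is_scone C (subsset (Delta n) K) X U (\<lambda>m \<theta>. e m (Act T n \<theta> x))"
proof (rule sconeI)
  show "U \<in> Obj C" using scone_D(1)[OF e] .
next
  fix m \<theta> assume "\<theta> \<in> Simp (subsset (Delta n) K) m"
  then show "e m (Act T n \<theta> x) \<in> hom C U (Ob X m)" using scone_D(2)[OF e, of "Act T n \<theta> x" m] KG by simp
next
  fix m k \<phi> \<theta> assume p: "simp_op k m \<phi>" and "\<theta> \<in> Simp (subsset (Delta n) K) m"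
  then have t: "\<theta> \<in> K m" by simp
  have "Act T m \<phi> (Act T n \<theta> x) = Act T n (op_comp \<theta> \<phi>) x"
    using sset_D(3)[OF T subcx_Delta(1)[OF K t] p x] .
  then show "Comp C (Opm X m \<phi>) (e m (Act T n \<theta> x)) = e k (Act T n (Act (subsset (Delta n) K) m \<phi> \<theta>) x)"
    using scone_D(3)[OF e p, of "Act T n \<theta> x"] KG[OF t] by simp
qed

lemma opm_scone:
  assumes C: "is_category C" and X: "is_sobj C X" and K: "is_subcomplex (Delta n) K"
  shows "is_scone C (subsset (Delta n) K) X (Ob X n) (\<lambda>m \<theta>. Opm X n \<theta>)"
proof (rule sconeI)
  show "Ob X n \<in> Obj C" using sobj_D(1)[OF X] .
next
  fix m \<theta> assume "\<theta> \<in> Simp (subsset (Delta n) K) m"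
  then show "Opm X n \<theta> \<in> hom C (Ob X n) (Ob X m)" using sobj_D(2)[OF X subcx_Delta(1)[OF K]] by simp
next
  fix m k \<phi> \<theta> assume p: "simp_op k m \<phi>" and "\<theta> \<in> Simp (subsset (Delta n) K) m"
  then show "Comp C (Opm X m \<phi>) (Opm X n \<theta>) = Opm X n (Act (subsset (Delta n) K) m \<phi> \<theta>)"
    using sobj_D(4)[OF X subcx_Delta(1)[OF K] p] by simp
qed





lemma glue1:
  assumes C: "is_category C" and X: "is_sobj C X" and T: "is_sset T" and F: "is_subcomplex T F"
    and hp: "horn_pushout T F F' n i x"
    and M: "is_Map C (subsset T F) X L c"
    and MH: "is_Map C (subsset (Delta n) (horn n i)) X LH cH"
    and h: "h \<in> hom C (Ob X n) LH" and hr: "\<And>m \<theta>. \<theta> \<in> horn n i m \<Longrightarrow> Comp C (cH m \<theta>) h = Opm X n \<theta>"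
    and r: "r \<in> hom C L LH" and rr: "\<And>m \<theta>. \<theta> \<in> horn n i m \<Longrightarrow> Comp C (cH m \<theta>) r = c m (Act T n \<theta> x)"
    and pb: "is_pullback C h r P p1 p2"
  shows "is_Map C (subsset T F') X P (glue C X T F n i x (\<lambda>m y. Comp C (c m y) p2) p1)"
proof -
  have Dh: "Dom C h = Ob X n" and Dr: "Dom C r = L" using h r by (auto simp: hom_def)
  have p1: "p1 \<in> hom C P (Ob X n)" and p2: "p2 \<in> hom C P L" and pc: "Comp C h p1 = Comp C r p2"
    and P: "P \<in> Obj C"
    using pullback_D(4-7)[OF pb] Dh Dr by auto
  have cHh: "cH m \<theta> \<in> hom C LH (Ob X m)" if "\<theta> \<in> horn n i m" for m \<theta>
    using scone_D(2)[OF Map_D1[OF MH], of \<theta> m] that by simp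
  have ch: "c m y \<in> hom C L (Ob X m)" if "y \<in> F m" for m y
    using scone_D(2)[OF Map_D1[OF M], of y m] that by simp
  have xT: "x \<in> Simp T n" using hp_D(1)[OF hp] .
  have hg: "Comp C (Opm X n \<theta>) p1 = Comp C (c m (Act T n \<theta> x)) p2" if t: "\<theta> \<in> horn n i m" for m \<theta>
  proof -
    have "Comp C (Opm X n \<theta>) p1 = Comp C (Comp C (cH m \<theta>) h) p1" using hr[OF t] by simp
    also have "\<dots> = Comp C (cH m \<theta>) (Comp C h p1)" using cat_assoc[OF C p1 h cHh[OF t]] by simp
    also have "\<dots> = Comp C (cH m \<theta>) (Comp C r p2)" using pc by simp
    also have "\<dots> = Comp C (Comp C (cH m \<theta>) r) p2" using cat_assoc[OF C p2 r cHh[OF t]] by simp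
    also have "\<dots> = Comp C (c m (Act T n \<theta> x)) p2" using rr[OF t] by simp
    finally show ?thesis .
  qed
  define d where "d = (\<lambda>m y. Comp C (c m y) p2)"
  have ds: "is_scone C (subsset T F) X P d" unfolding d_def by (rule scone_comp[OF C X Map_D1[OF M] p2])
  have hg': "\<And>m \<theta>. \<theta> \<in> horn n i m \<Longrightarrow> Comp C (Opm X n \<theta>) p1 = d m (Act T n \<theta> x)"
    using hg by (simp add: d_def)
  note gs = glue_scone[OF C X T F hp ds p1 hg']
  show ?thesis
    unfolding d_def[symmetric] is_Map_def
  proof (intro conjI allI impI)
    show "is_scone C (subsset T F') X P (glue C X T F n i x d p1)" using gs .
  next
    fix U d' assume d': "is_scone C (subsset T F') X U d'"
    have U: "U \<in> Obj C" using scone_D(1)[OF d'] .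
    have FF: "\<And>m. F m \<subseteq> F' m" using F_sub_F'[OF hp] .
    have dF: "is_scone C (subsset T F) X U d'" using scone_mono[OF d' F FF] .
    obtain v2 where v2: "v2 \<in> hom C U L" "\<And>m y. y \<in> F m \<Longrightarrow> Comp C (c m y) v2 = d' m y"
      using Map_ex[OF M dF] by auto
    have xF': "x \<in> F' n" using x_in_F'(1)[OF T hp] .
    have g: "d' n x \<in> hom C U (Ob X n)" using scone_D(2)[OF d', of x n] xF' by simp
    have dact: "Comp C (Opm X n \<theta>) (d' n x) = d' m (Act T n \<theta> x)" if "simp_op m n \<theta>" for m \<theta>
      using scone_D(3)[OF d' that, of x] xF' by simp
    have eq1: "Comp C h (d' n x) = Comp C r v2"
    proof (rule Map_uniq[OF C X MH cat_comp[OF C g h] cat_comp[OF C v2(1) r]])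
      fix m \<theta> assume "\<theta> \<in> Simp (subsset (Delta n) (horn n i)) m"
      then have t: "\<theta> \<in> horn n i m" by simp
      have s: "simp_op m n \<theta>" using t by (simp add: horn_def)
      have "Comp C (cH m \<theta>) (Comp C h (d' n x)) = Comp C (Comp C (cH m \<theta>) h) (d' n x)"
        using cat_assoc[OF C g h cHh[OF t]] by simp
      also have "\<dots> = d' m (Act T n \<theta> x)" using hr[OF t] dact[OF s] by simp
      also have "\<dots> = Comp C (c m (Act T n \<theta> x)) v2" using v2(2)[OF hp_D(2)[OF hp t]] by simp
      also have "\<dots> = Comp C (Comp C (cH m \<theta>) r) v2" using rr[OF t] by simp
      also have "\<dots> = Comp C (cH m \<theta>) (Comp C r v2)" using cat_assoc[OF C v2(1) r cHh[OF t]] by simp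
      finally show "Comp C (cH m \<theta>) (Comp C h (d' n x)) = Comp C (cH m \<theta>) (Comp C r v2)" .
    qed
    obtain v where v: "v \<in> hom C U P" "Comp C p1 v = d' n x" "Comp C p2 v = v2"
      using pullback_univ[OF pb U] g v2(1) eq1 Dh Dr by metis
    have gl: "Comp C (glue C X T F n i x d p1 m y) v = d' m y" if y: "y \<in> F' m" for m y
    proof (cases "y \<in> F m")
      case True
      have "Comp C (glue C X T F n i x d p1 m y) v = Comp C (Comp C (c m y) p2) v"
        using True by (simp add: glue_F d_def)
      also have "\<dots> = Comp C (c m y) (Comp C p2 v)" using cat_assoc[OF C v(1) p2 ch[OF True]] by simp
      also have "\<dots> = d' m y" using v(3) v2(2)[OF True] by simp
      finally show ?thesis .
    next
      case False
      then obtain \<theta> where t: "simp_op m n \<theta>" "y = Act T n \<theta> x" using F'_cases[OF hp y] by blast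
      have "Comp C (glue C X T F n i x d p1 m y) v = Comp C (Comp C (Opm X n \<theta>) p1) v"
        using glue_act[OF hp t(1) hg'] t(2) by simp
      also have "\<dots> = Comp C (Opm X n \<theta>) (Comp C p1 v)"
        using cat_assoc[OF C v(1) p1 sobj_D(2)[OF X t(1)]] by simp
      also have "\<dots> = d' m y" using v(2) dact[OF t(1)] t(2) by simp
      finally show ?thesis .
    qed
    show "\<exists>!u. u \<in> hom C U P \<and> (\<forall>m. \<forall>y\<in>Simp (subsset T F') m. Comp C (glue C X T F n i x d p1 m y) u = d' m y)"
    proof (rule ex1I[of _ v])
      show "v \<in> hom C U P \<and> (\<forall>m. \<forall>y\<in>Simp (subsset T F') m. Comp C (glue C X T F n i x d p1 m y) v = d' m y)"
        using v(1) gl by simp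
    next
      fix w assume w: "w \<in> hom C U P \<and> (\<forall>m. \<forall>y\<in>Simp (subsset T F') m. Comp C (glue C X T F n i x d p1 m y) w = d' m y)"
      then have wh: "w \<in> hom C U P" and wg: "\<And>m y. y \<in> F' m \<Longrightarrow> Comp C (glue C X T F n i x d p1 m y) w = d' m y"
        by auto
      have a: "Comp C p2 w = v2"
      proof (rule Map_uniq[OF C X M cat_comp[OF C wh p2] v2(1)])
        fix m y assume "y \<in> Simp (subsset T F) m"
        then have yF: "y \<in> F m" by simp
        have "Comp C (c m y) (Comp C p2 w) = Comp C (Comp C (c m y) p2) w"
          using cat_assoc[OF C wh p2 ch[OF yF]] by simp
        also have "\<dots> = d' m y" using wg[of y m] yF FF by (auto simp: glue_F d_def)
        finally show "Comp C (c m y) (Comp C p2 w) = Comp C (c m y) v2" using v2(2)[OF yF] by simp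
      qed
      have gx: "glue C X T F n i x d p1 n x = p1"
        using glue_act[OF hp simp_op_id hg'] x_in_F'(2)[OF T hp] sobj_D(3)[OF X] cat_idl[OF C p1]
        by (simp del: upt_Suc)
      have b: "Comp C p1 w = d' n x" using wg[OF xF'] gx by simp
      show "w = v" by (rule pullback_uniq[OF C pb wh v(1)]) (use a b v in simp_all)
    qed
  qed
qed




lemma kg_sobj: "k_groupoid C cov k X \<Longrightarrow> is_sobj C X"
  unfolding k_groupoid_def by (rule conjunct1)

lemma kg_D:
  assumes "k_groupoid C cov k X" "0 < n" "i \<le> n" "is_Map C (subsset (Delta n) (horn n i)) X L c"
    "u \<in> hom C (Ob X n) L" "is_restr C (horn n i) (\<lambda>m \<theta>. Opm X n \<theta>) c u"
  shows "u \<in> cov \<and> (k < n \<longrightarrow> is_iso C u)"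
proof -
  have "\<forall>n i L c u. 0 < n \<and> i \<le> n \<and> is_Map C (subsset (Delta n) (horn n i)) X L c \<and>
        u \<in> hom C (Ob X n) L \<and> is_restr C (horn n i) (\<lambda>m \<theta>. Opm X n \<theta>) c u \<longrightarrow>
        u \<in> cov \<and> (k < n \<longrightarrow> is_iso C u)"
    using assms(1) unfolding k_groupoid_def by (rule conjunct2)
  then show ?thesis using assms(2-6) by simp
qed

lemma mexp_D:
  assumes "m_expansion T m S"
  shows "0 < m" "is_subcomplex T S" "\<exists>L (F :: nat \<Rightarrow> nat \<Rightarrow> 'a set) (nn :: nat \<Rightarrow> nat) (ii :: nat \<Rightarrow> nat) (xs :: nat \<Rightarrow> 'a).
        F 0 = S \<and> F L = Simp T \<and>
        (\<forall>l \<le> L. is_subcomplex T (F l)) \<and>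
        (\<forall>l < L. m \<le> nn l \<and> ii l \<le> nn l \<and> (\<forall>l'. l \<le> l' \<and> l' < L \<longrightarrow> nn l \<le> nn l') \<and>
                 horn_pushout T (F l) (F (Suc l)) (nn l) (ii l) (xs l))"
proof -
  note a = assms[unfolded m_expansion_def]
  show "0 < m" using a by (rule conjunct1)
  show "is_subcomplex T S" using a by (elim conjE)
  show "\<exists>L (F :: nat \<Rightarrow> nat \<Rightarrow> 'a set) (nn :: nat \<Rightarrow> nat) (ii :: nat \<Rightarrow> nat) (xs :: nat \<Rightarrow> 'a).
        F 0 = S \<and> F L = Simp T \<and>
        (\<forall>l \<le> L. is_subcomplex T (F l)) \<and>
        (\<forall>l < L. m \<le> nn l \<and> ii l \<le> nn l \<and> (\<forall>l'. l \<le> l' \<and> l' < L \<longrightarrow> nn l \<le> nn l') \<and>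
                 horn_pushout T (F l) (F (Suc l)) (nn l) (ii l) (xs l))"
    using a by (elim conjE)
qed

lemma part1:
  assumes D: "descent_category C cov" and T: "is_sset T" and E: "m_expansion T m S"
    and G: "k_groupoid C cov k X"
    and MT: "is_Map C T X LT cT" and MS: "is_Map C (subsset T S) X LS cS"
    and u: "u \<in> hom C LT LS" and ur: "is_restr C S cT cS u"
  shows "u \<in> cov \<and> (k < m \<longrightarrow> is_iso C u)"
proof -
  have C: "is_category C" using desc_cat[OF D] .
  have Lim: "has_finite_limits C" using desc_lim[OF D] .
  have X: "is_sobj C X" using kg_sobj[OF G] .
  have E0: "0 < m" and ES: "is_subcomplex T S" using mexp_D[OF E] by simp_all
  obtain N F nn ii xs where big: "F 0 = S \<and> F N = Simp T \<and>
        (\<forall>l \<le> N. is_subcomplex T (F l)) \<and>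
        (\<forall>l < N. m \<le> nn l \<and> ii l \<le> nn l \<and> (\<forall>l'. l \<le> l' \<and> l' < N \<longrightarrow> nn l \<le> nn l') \<and>
                 horn_pushout T (F l) (F (Suc l)) (nn l) (ii l) (xs l))"
    using mexp_D(3)[OF E] by (elim exE) (erule that)
  have F0: "F 0 = S" and FN: "F N = Simp T"
    and Fsub': "\<forall>l \<le> N. is_subcomplex T (F l)"
    and Fst': "\<forall>l < N. m \<le> nn l \<and> ii l \<le> nn l \<and> horn_pushout T (F l) (F (Suc l)) (nn l) (ii l) (xs l)"
    using big by simp_all
  have Fsub: "\<And>l. l \<le> N \<Longrightarrow> is_subcomplex T (F l)" using Fsub' by simp
  have Fst: "\<And>l. l < N \<Longrightarrow> m \<le> nn l \<and> ii l \<le> nn l \<and> horn_pushout T (F l) (F (Suc l)) (nn l) (ii l) (xs l)"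
    using Fst' by simp
  have cSh: "cS n y \<in> hom C LS (Ob X n)" if "y \<in> S n" for n y
    using scone_D(2)[OF Map_D1[OF MS], of y n] that by simp
  have claim: "\<exists>M cM q. is_Map C (subsset T (F l)) X M cM \<and> q \<in> hom C M LS \<and>
      (\<forall>n. \<forall>y\<in>S n. Comp C (cS n y) q = cM n y) \<and> q \<in> cov \<and> (k < m \<longrightarrow> is_iso C q) \<and>
      (\<forall>n. S n \<subseteq> F l n)" if "l \<le> N" for l
    using that
  proof (induction l)
    case 0
    have LS: "LS \<in> Obj C" using scone_D(1)[OF Map_D1[OF MS]] .
    show ?case
    proof (intro exI conjI)
      show "is_Map C (subsset T (F 0)) X LS cS" using MS F0 by simp
      show "Idm C LS \<in> hom C LS LS" using cat_id[OF C LS] .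
      show "\<forall>n. \<forall>y\<in>S n. Comp C (cS n y) (Idm C LS) = cS n y" using cat_idr[OF C cSh] by simp
      show "Idm C LS \<in> cov" using desc_id[OF D LS] .
      show "k < m \<longrightarrow> is_iso C (Idm C LS)" using id_iso[OF C LS] by simp
      show "\<forall>n. S n \<subseteq> F 0 n" using F0 by simp
    qed
  next
    case (Suc l)
    then have lN: "l < N" by simp
    obtain M cM q where IH: "is_Map C (subsset T (F l)) X M cM" "q \<in> hom C M LS"
      "\<And>n y. y \<in> S n \<Longrightarrow> Comp C (cS n y) q = cM n y" "q \<in> cov" "k < m \<longrightarrow> is_iso C q"
      "\<And>n. S n \<subseteq> F l n"
      using Suc.IH lN by auto
    define n where "n = nn l"
    define i where "i = ii l"
    define x where "x = xs l"
    have mn: "m \<le> n" and iN: "i \<le> n" and hp: "horn_pushout T (F l) (F (Suc l)) n i x"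
      using Fst[OF lN] by (simp_all add: n_def i_def x_def)
    have Fl: "is_subcomplex T (F l)" using Fsub lN by simp
    obtain LH cH where MH: "is_Map C (subsset (Delta n) (horn n i)) X LH cH"
      using Map_Delta_exists[OF C Lim X horn_sub] by blast
    obtain h where h: "h \<in> hom C (Ob X n) LH" "\<And>m \<theta>. \<theta> \<in> horn n i m \<Longrightarrow> Comp C (cH m \<theta>) h = Opm X n \<theta>"
      using Map_ex[OF MH opm_scone[OF C X horn_sub]] by auto
    have hcov: "h \<in> cov \<and> (k < n \<longrightarrow> is_iso C h)"
      by (rule kg_D[OF G _ iN MH h(1)]) (use E0 mn h(2) in \<open>auto simp: is_restr_def\<close>)
    obtain r where r: "r \<in> hom C M LH" "\<And>m \<theta>. \<theta> \<in> horn n i m \<Longrightarrow> Comp C (cH m \<theta>) r = cM m (Act T n \<theta> x)"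
      using Map_ex[OF MH act_scone[OF T Map_D1[OF IH(1)] hp_D(1)[OF hp] horn_sub hp_D(2)[OF hp]]] by auto
    have hm: "h \<in> Mor C" "r \<in> Mor C" "Cod C h = Cod C r" using h(1) r(1) by (auto simp: hom_def)
    obtain P p1 p2 where pb: "is_pullback C h r P p1 p2"
      using pullback_exists[OF C Lim hm] by blast
    have MP: "is_Map C (subsset T (F (Suc l))) X P (glue C X T (F l) n i x (\<lambda>m y. Comp C (cM m y) p2) p1)"
      by (rule glue1[OF C X T Fl hp IH(1) MH h r pb])
    have p2: "p2 \<in> hom C P M" using pullback_D(6)[OF pb] r(1) by (simp add: hom_def)
    have p2c: "p2 \<in> cov" using pullback_cov[OF D _ pb] hcov by simp
    have p2i: "k < m \<longrightarrow> is_iso C p2" using pullback_iso[OF C pb] hcov mn by auto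
    show ?case
    proof (intro exI conjI)
      show "is_Map C (subsset T (F (Suc l))) X P (glue C X T (F l) n i x (\<lambda>m y. Comp C (cM m y) p2) p1)"
        using MP .
      show "Comp C q p2 \<in> hom C P LS" using cat_comp[OF C p2 IH(2)] .
      show "\<forall>na. \<forall>y\<in>S na. Comp C (cS na y) (Comp C q p2) = glue C X T (F l) n i x (\<lambda>m y. Comp C (cM m y) p2) p1 na y"
      proof (intro allI ballI)
        fix na y assume y: "y \<in> S na"
        have "Comp C (cS na y) (Comp C q p2) = Comp C (Comp C (cS na y) q) p2"
          using cat_assoc[OF C p2 IH(2) cSh[OF y]] by simp
        also have "\<dots> = Comp C (cM na y) p2" by (simp only: IH(3)[OF y])
        finally show "Comp C (cS na y) (Comp C q p2) = glue C X T (F l) n i x (\<lambda>m y. Comp C (cM m y) p2) p1 na y"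
          using glue_F[of y "F l" na C X T n i x "\<lambda>m y. Comp C (cM m y) p2" p1] IH(6)[of na] y by auto
      qed
      show "Comp C q p2 \<in> cov" using cov_comp[OF D p2c IH(4) p2 IH(2)] .
      show "k < m \<longrightarrow> is_iso C (Comp C q p2)" using iso_comp[OF C p2 IH(2)] IH(5) p2i by auto
      show "\<forall>na. S na \<subseteq> F (Suc l) na" using IH(6) F_sub_F'[OF hp] by blast
    qed
  qed
  obtain M cM q where M: "is_Map C (subsset T (F N)) X M cM" and q: "q \<in> hom C M LS"
    and qr: "\<And>n y. y \<in> S n \<Longrightarrow> Comp C (cS n y) q = cM n y" and qc: "q \<in> cov"
    and qi: "k < m \<longrightarrow> is_iso C q"
    using claim[of N] by auto
  have MT': "is_Map C T X M cM" using M FN by simp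
  obtain w where w: "w \<in> hom C LT M" "\<And>n y. y \<in> Simp T n \<Longrightarrow> Comp C (cM n y) w = cT n y"
    using Map_ex[OF MT' Map_D1[OF MT]] by auto
  have wi: "is_iso C w" using Map_iso[OF C X MT MT' w] .
  have SS: "\<And>n. S n \<subseteq> Simp T n" using subcx_D(1)[OF ES] .
  have "u = Comp C q w"
  proof (rule Map_uniq[OF C X MS u cat_comp[OF C w(1) q]])
    fix n y assume "y \<in> Simp (subsset T S) n"
    then have y: "y \<in> S n" by simp
    have "Comp C (cS n y) (Comp C q w) = Comp C (Comp C (cS n y) q) w"
      using cat_assoc[OF C w(1) q cSh[OF y]] by simp
    also have "\<dots> = cT n y" using qr[OF y] w(2) SS y by auto
    finally show "Comp C (cS n y) u = Comp C (cS n y) (Comp C q w)"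
      using ur y by (simp add: is_restr_def)
  qed
  then show ?thesis
    using cov_comp[OF D iso_cov[OF D w(1) wi] qc w(1) q] iso_comp[OF C w(1) q wi] qi by auto
qed





definition relrep ::
  "('o, 'm, 'x) category_scheme \<Rightarrow> 'a sset \<Rightarrow> ('o, 'm) sobj \<Rightarrow> ('o, 'm) sobj \<Rightarrow> (nat \<Rightarrow> 'm)
    \<Rightarrow> (nat \<Rightarrow> 'a set) \<Rightarrow> 'o \<Rightarrow> (nat \<Rightarrow> 'a \<Rightarrow> 'm) \<Rightarrow> (nat \<Rightarrow> 'a \<Rightarrow> 'm) \<Rightarrow> bool" where
  "relrep C T X Y f F M e eY \<longleftrightarrow>
     M \<in> Obj C \<and> is_scone C (subsset T F) X M e \<and> is_scone C T Y M eY \<and>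
     (\<forall>n. \<forall>y\<in>F n. Comp C (f n) (e n y) = eY n y) \<and>
     (\<forall>U d dY. is_scone C (subsset T F) X U d \<and> is_scone C T Y U dY \<and>
        (\<forall>n. \<forall>y\<in>F n. Comp C (f n) (d n y) = dY n y) \<longrightarrow>
        (\<exists>!v. v \<in> hom C U M \<and> (\<forall>n. \<forall>y\<in>F n. Comp C (e n y) v = d n y) \<and>
            (\<forall>n. \<forall>y\<in>Simp T n. Comp C (eY n y) v = dY n y)))"

lemma relrep_D:
  assumes "relrep C T X Y f F M e eY"
  shows "M \<in> Obj C" "is_scone C (subsset T F) X M e" "is_scone C T Y M eY"
    "\<And>n y. y \<in> F n \<Longrightarrow> Comp C (f n) (e n y) = eY n y"
proof -
  note a = assms[unfolded relrep_def]
  show "M \<in> Obj C" using a by (elim conjE)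
  show "is_scone C (subsset T F) X M e" using a by (elim conjE)
  show "is_scone C T Y M eY" using a by (elim conjE)
  have "\<forall>n. \<forall>y\<in>F n. Comp C (f n) (e n y) = eY n y" using a by (elim conjE)
  then show "\<And>n y. y \<in> F n \<Longrightarrow> Comp C (f n) (e n y) = eY n y" by simp
qed

lemma relrep_ex1:
  assumes "relrep C T X Y f F M e eY" "is_scone C (subsset T F) X U d" "is_scone C T Y U dY"
    "\<forall>n. \<forall>y\<in>F n. Comp C (f n) (d n y) = dY n y"
  shows "\<exists>!v. v \<in> hom C U M \<and> (\<forall>n. \<forall>y\<in>F n. Comp C (e n y) v = d n y) \<and>
            (\<forall>n. \<forall>y\<in>Simp T n. Comp C (eY n y) v = dY n y)"
proof -
  have "\<forall>U d dY. is_scone C (subsset T F) X U d \<and> is_scone C T Y U dY \<and>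
        (\<forall>n. \<forall>y\<in>F n. Comp C (f n) (d n y) = dY n y) \<longrightarrow>
        (\<exists>!v. v \<in> hom C U M \<and> (\<forall>n. \<forall>y\<in>F n. Comp C (e n y) v = d n y) \<and>
            (\<forall>n. \<forall>y\<in>Simp T n. Comp C (eY n y) v = dY n y))"
    using assms(1)[unfolded relrep_def] by (elim conjE)
  then show ?thesis using assms(2-4) by simp
qed

lemma relrepI:
  assumes "M \<in> Obj C" "is_scone C (subsset T F) X M e" "is_scone C T Y M eY"
    "\<And>n y. y \<in> F n \<Longrightarrow> Comp C (f n) (e n y) = eY n y"
    "\<And>U d dY. is_scone C (subsset T F) X U d \<Longrightarrow> is_scone C T Y U dY \<Longrightarrow>
        (\<forall>n. \<forall>y\<in>F n. Comp C (f n) (d n y) = dY n y) \<Longrightarrow>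
        (\<exists>!v. v \<in> hom C U M \<and> (\<forall>n. \<forall>y\<in>F n. Comp C (e n y) v = d n y) \<and>
            (\<forall>n. \<forall>y\<in>Simp T n. Comp C (eY n y) v = dY n y))"
  shows "relrep C T X Y f F M e eY"
  unfolding relrep_def using assms by simp

lemma relrep_ex:
  assumes "relrep C T X Y f F M e eY" "is_scone C (subsset T F) X U d" "is_scone C T Y U dY"
    "\<And>n y. y \<in> F n \<Longrightarrow> Comp C (f n) (d n y) = dY n y"
  obtains v where "v \<in> hom C U M" "\<And>n y. y \<in> F n \<Longrightarrow> Comp C (e n y) v = d n y"
            "\<And>n y. y \<in> Simp T n \<Longrightarrow> Comp C (eY n y) v = dY n y"
proof -
  have "\<exists>v. v \<in> hom C U M \<and> (\<forall>n. \<forall>y\<in>F n. Comp C (e n y) v = d n y) \<and>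
            (\<forall>n. \<forall>y\<in>Simp T n. Comp C (eY n y) v = dY n y)"
    using ex1_implies_ex[OF relrep_ex1[OF assms(1-3)]] assms(4) by simp
  then obtain v where "v \<in> hom C U M" "\<forall>n. \<forall>y\<in>F n. Comp C (e n y) v = d n y"
            "\<forall>n. \<forall>y\<in>Simp T n. Comp C (eY n y) v = dY n y" by (elim exE conjE)
  then show ?thesis using that by simp
qed

lemma smorph_D:
  assumes "is_smorph C X Y f"
  shows "is_sobj C X" "is_sobj C Y" "\<And>n. f n \<in> hom C (Ob X n) (Ob Y n)"
    "\<And>n m \<theta>. simp_op m n \<theta> \<Longrightarrow> Comp C (f m) (Opm X n \<theta>) = Comp C (Opm Y n \<theta>) (f n)"
  using assms unfolding is_smorph_def by simp_all

lemma push_scone: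
  assumes C: "is_category C" and fs: "is_smorph C X Y f" and c: "is_scone C T X L c"
  shows "is_scone C T Y L (\<lambda>m y. Comp C (f m) (c m y))"
proof (rule sconeI)
  show "L \<in> Obj C" using scone_D(1)[OF c] .
  fix n x assume x: "x \<in> Simp T n"
  show "Comp C (f n) (c n x) \<in> hom C L (Ob Y n)" using cat_comp[OF C scone_D(2)[OF c x] smorph_D(3)[OF fs]] .
  fix m \<theta> assume t: "simp_op m n \<theta>"
  have oX: "Opm X n \<theta> \<in> hom C (Ob X n) (Ob X m)" using sobj_D(2)[OF smorph_D(1)[OF fs] t] .
  have oY: "Opm Y n \<theta> \<in> hom C (Ob Y n) (Ob Y m)" using sobj_D(2)[OF smorph_D(2)[OF fs] t] .
  have "Comp C (Opm Y n \<theta>) (Comp C (f n) (c n x)) = Comp C (Comp C (Opm Y n \<theta>) (f n)) (c n x)"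
    using cat_assoc[OF C scone_D(2)[OF c x] smorph_D(3)[OF fs] oY] by simp
  also have "\<dots> = Comp C (Comp C (f m) (Opm X n \<theta>)) (c n x)" using smorph_D(4)[OF fs t] by simp
  also have "\<dots> = Comp C (f m) (Comp C (Opm X n \<theta>) (c n x))"
    using cat_assoc[OF C scone_D(2)[OF c x] oX smorph_D(3)[OF fs]] by simp
  also have "\<dots> = Comp C (f m) (c m (Act T n \<theta> x))" using scone_D(3)[OF c t x] by simp
  finally show "Comp C (Opm Y n \<theta>) (Comp C (f n) (c n x)) = Comp C (f m) (c m (Act T n \<theta> x))" .
qed

lemma relrep_uniq:
  assumes C: "is_category C" and fs: "is_smorph C X Y f" and R: "relrep C T X Y f F M e eY"
    and v: "v \<in> hom C U M" and w: "w \<in> hom C U M"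
    and e1: "\<And>n y. y \<in> F n \<Longrightarrow> Comp C (e n y) v = Comp C (e n y) w"
    and e2: "\<And>n y. y \<in> Simp T n \<Longrightarrow> Comp C (eY n y) v = Comp C (eY n y) w"
  shows "v = w"
proof -
  have X: "is_sobj C X" and Y: "is_sobj C Y" using smorph_D[OF fs] by auto
  have s1: "is_scone C (subsset T F) X U (\<lambda>m y. Comp C (e m y) v)" using scone_comp[OF C X relrep_D(2)[OF R] v] .
  have s2: "is_scone C T Y U (\<lambda>m y. Comp C (eY m y) v)" using scone_comp[OF C Y relrep_D(3)[OF R] v] .
  have cp: "\<forall>n. \<forall>y\<in>F n. Comp C (f n) (Comp C (e n y) v) = Comp C (eY n y) v"
  proof (intro allI ballI)
    fix n y assume y: "y \<in> F n"
    have eh: "e n y \<in> hom C M (Ob X n)" using scone_D(2)[OF relrep_D(2)[OF R], of y n] y by simp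
    show "Comp C (f n) (Comp C (e n y) v) = Comp C (eY n y) v"
      using cat_assoc[OF C v eh smorph_D(3)[OF fs]] relrep_D(4)[OF R y] by simp
  qed
  show ?thesis
    by (rule ex1_uniq[OF relrep_ex1[OF R s1 s2 cp]]) (use v w e1 e2 in simp_all)
qed

lemma pullback_sym:
  assumes C: "is_category C" and pb: "is_pullback C f g P p1 p2"
  shows "is_pullback C g f P p2 p1"
proof (rule pullbackI)
  note D = pullback_D[OF pb]
  show "g \<in> Mor C" "f \<in> Mor C" "Cod C g = Cod C f" "P \<in> Obj C" "p2 \<in> hom C P (Dom C g)"
    "p1 \<in> hom C P (Dom C f)" "Comp C g p2 = Comp C f p1" using D(1-7) by simp_all
  fix Q q1 q2 assume a: "Q \<in> Obj C" "q1 \<in> hom C Q (Dom C g)" "q2 \<in> hom C Q (Dom C f)"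
    "Comp C g q1 = Comp C f q2"
  obtain v where v: "v \<in> hom C Q P" "Comp C p1 v = q2" "Comp C p2 v = q1"
    using pullback_univ[OF pb a(1,3,2) a(4)[symmetric]] by blast
  show "\<exists>!v. v \<in> hom C Q P \<and> Comp C p2 v = q1 \<and> Comp C p1 v = q2"
  proof (rule ex1I[of _ v])
    show "v \<in> hom C Q P \<and> Comp C p2 v = q1 \<and> Comp C p1 v = q2" using v by simp
  next
    fix w assume "w \<in> hom C Q P \<and> Comp C p2 w = q1 \<and> Comp C p1 w = q2"
    then show "w = v" using pullback_uniq[OF C pb, of w Q v] v by simp
  qed
qed

lemma fib_D:
  assumes "fibration C cov X Y f"
  shows "is_smorph C X Y f"
    "\<And>n i LSX cSX LSY cSY. 0 < n \<Longrightarrow> i \<le> n \<Longrightarrow>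
        is_Map C (subsset (Delta n) (horn n i)) X LSX cSX \<Longrightarrow>
        is_Map C (subsset (Delta n) (horn n i)) Y LSY cSY \<Longrightarrow>
        relmap_prop C (\<lambda>u. u \<in> cov) (Delta n) (horn n i) f
          (Ob X n) (\<lambda>m \<theta>. Opm X n \<theta>) LSX cSX LSY cSY (Ob Y n) (\<lambda>m \<theta>. Opm Y n \<theta>)"
proof -
  note a = assms[unfolded fibration_def]
  show "is_smorph C X Y f" using a by (rule conjunct1)
  fix n i LSX cSX LSY cSY assume "0 < n" "i \<le> n" "is_Map C (subsset (Delta n) (horn n i)) X LSX cSX"
        "is_Map C (subsset (Delta n) (horn n i)) Y LSY cSY"
  moreover have "\<forall>n i LSX cSX LSY cSY. 0 < n \<and> i \<le> n \<and>
        is_Map C (subsset (Delta n) (horn n i)) X LSX cSX \<and>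
        is_Map C (subsset (Delta n) (horn n i)) Y LSY cSY \<longrightarrow>
        relmap_prop C (\<lambda>u. u \<in> cov) (Delta n) (horn n i) f
          (Ob X n) (\<lambda>m \<theta>. Opm X n \<theta>) LSX cSX LSY cSY (Ob Y n) (\<lambda>m \<theta>. Opm Y n \<theta>)"
    using a by (rule conjunct2)
  ultimately show "relmap_prop C (\<lambda>u. u \<in> cov) (Delta n) (horn n i) f
          (Ob X n) (\<lambda>m \<theta>. Opm X n \<theta>) LSX cSX LSY cSY (Ob Y n) (\<lambda>m \<theta>. Opm Y n \<theta>)" by simp
qed

lemma relmap_D:
  assumes "relmap_prop C Q T S f LTX cTX LSX cSX LSY cSY LTY cTY"
    "a \<in> hom C LSX LSY" "is_push C S f cSX cSY a"
    "b \<in> hom C LTY LSY" "is_restr C S cTY cSY b"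
    "is_pullback C a b P p1 p2"
    "u \<in> hom C LTX P" "is_restr C S cTX cSX (Comp C p1 u)"
    "is_push C (Simp T) f cTX cTY (Comp C p2 u)"
  shows "Q u"
  using assms(1)[unfolded relmap_prop_def, rule_format, of a b P p1 p2 u] assms(2-9) by simp




lemma rel_base:
  assumes C: "is_category C" and fs: "is_smorph C X Y f" and ES: "is_subcomplex T S"
    and MSX: "is_Map C (subsset T S) X LSX cSX" and MSY: "is_Map C (subsset T S) Y LSY cSY"
    and MTY: "is_Map C T Y LTY cTY"
    and a: "a \<in> hom C LSX LSY" and ap: "is_push C S f cSX cSY a"
    and b: "b \<in> hom C LTY LSY" and br: "is_restr C S cTY cSY b"
    and pb: "is_pullback C a b P p1 p2"
  shows "relrep C T X Y f S P (\<lambda>n y. Comp C (cSX n y) p1) (\<lambda>n y. Comp C (cTY n y) p2)"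
proof -
  have X: "is_sobj C X" and Y: "is_sobj C Y" using smorph_D[OF fs] by auto
  have Da: "Dom C a = LSX" and Db: "Dom C b = LTY" using a b by (auto simp: hom_def)
  have p1: "p1 \<in> hom C P LSX" and p2: "p2 \<in> hom C P LTY" and pc: "Comp C a p1 = Comp C b p2"
    and P: "P \<in> Obj C"
    using pullback_D(4-7)[OF pb] Da Db by auto
  have SS: "\<And>n. S n \<subseteq> Simp T n" using subcx_D(1)[OF ES] .
  have cSXh: "cSX n y \<in> hom C LSX (Ob X n)" if "y \<in> S n" for n y
    using scone_D(2)[OF Map_D1[OF MSX], of y n] that by simp
  have cSYh: "cSY n y \<in> hom C LSY (Ob Y n)" if "y \<in> S n" for n y
    using scone_D(2)[OF Map_D1[OF MSY], of y n] that by simp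
  have cTYh: "cTY n y \<in> hom C LTY (Ob Y n)" if "y \<in> Simp T n" for n y
    using scone_D(2)[OF Map_D1[OF MTY], of y n] that by simp
  have apu: "Comp C (cSY n y) a = Comp C (f n) (cSX n y)" if "y \<in> S n" for n y
    using ap that unfolding is_push_def by simp
  have bru: "Comp C (cSY n y) b = cTY n y" if "y \<in> S n" for n y
    using br that unfolding is_restr_def by simp
  show ?thesis
  proof (rule relrepI)
    show "P \<in> Obj C" using P .
    show "is_scone C (subsset T S) X P (\<lambda>n y. Comp C (cSX n y) p1)" using scone_comp[OF C X Map_D1[OF MSX] p1] .
    show "is_scone C T Y P (\<lambda>n y. Comp C (cTY n y) p2)" using scone_comp[OF C Y Map_D1[OF MTY] p2] .
  next
    fix n y assume y: "y \<in> S n"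
    have "Comp C (f n) (Comp C (cSX n y) p1) = Comp C (Comp C (f n) (cSX n y)) p1"
      using cat_assoc[OF C p1 cSXh[OF y] smorph_D(3)[OF fs]] by simp
    also have "\<dots> = Comp C (Comp C (cSY n y) a) p1" using apu[OF y] by simp
    also have "\<dots> = Comp C (cSY n y) (Comp C a p1)" using cat_assoc[OF C p1 a cSYh[OF y]] by simp
    also have "\<dots> = Comp C (cSY n y) (Comp C b p2)" using pc by simp
    also have "\<dots> = Comp C (Comp C (cSY n y) b) p2" using cat_assoc[OF C p2 b cSYh[OF y]] by simp
    also have "\<dots> = Comp C (cTY n y) p2" using bru[OF y] by simp
    finally show "Comp C (f n) (Comp C (cSX n y) p1) = Comp C (cTY n y) p2" .
  next
    fix U d dY assume d: "is_scone C (subsset T S) X U d" and dY: "is_scone C T Y U dY"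
      and cp: "\<forall>n. \<forall>y\<in>S n. Comp C (f n) (d n y) = dY n y"
    have U: "U \<in> Obj C" using scone_D(1)[OF d] .
    obtain v1 where v1: "v1 \<in> hom C U LSX" "\<And>n y. y \<in> S n \<Longrightarrow> Comp C (cSX n y) v1 = d n y"
      using Map_ex[OF MSX d] by auto
    obtain v2 where v2: "v2 \<in> hom C U LTY" "\<And>n y. y \<in> Simp T n \<Longrightarrow> Comp C (cTY n y) v2 = dY n y"
      using Map_ex[OF MTY dY] by auto
    have eq: "Comp C a v1 = Comp C b v2"
    proof (rule Map_uniq[OF C Y MSY cat_comp[OF C v1(1) a] cat_comp[OF C v2(1) b]])
      fix n y assume "y \<in> Simp (subsset T S) n"
      then have y: "y \<in> S n" by simp
      have "Comp C (cSY n y) (Comp C a v1) = Comp C (Comp C (cSY n y) a) v1"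
        using cat_assoc[OF C v1(1) a cSYh[OF y]] by simp
      also have "\<dots> = Comp C (Comp C (f n) (cSX n y)) v1" using apu[OF y] by simp
      also have "\<dots> = Comp C (f n) (Comp C (cSX n y) v1)"
        using cat_assoc[OF C v1(1) cSXh[OF y] smorph_D(3)[OF fs]] by simp
      also have "\<dots> = dY n y" using v1(2)[OF y] cp y by simp
      also have "\<dots> = Comp C (cTY n y) v2"
      proof -
        have "y \<in> Simp T n" using SS[of n] y by blast
        then show ?thesis using v2(2) by simp
      qed
      also have "\<dots> = Comp C (Comp C (cSY n y) b) v2" using bru[OF y] by simp
      also have "\<dots> = Comp C (cSY n y) (Comp C b v2)" using cat_assoc[OF C v2(1) b cSYh[OF y]] by simp
      finally show "Comp C (cSY n y) (Comp C a v1) = Comp C (cSY n y) (Comp C b v2)" .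
    qed
    obtain v where v: "v \<in> hom C U P" "Comp C p1 v = v1" "Comp C p2 v = v2"
      using pullback_univ[OF pb U] v1(1) v2(1) eq Da Db by metis
    show "\<exists>!v. v \<in> hom C U P \<and> (\<forall>n. \<forall>y\<in>S n. Comp C (Comp C (cSX n y) p1) v = d n y) \<and>
            (\<forall>n. \<forall>y\<in>Simp T n. Comp C (Comp C (cTY n y) p2) v = dY n y)"
    proof (rule ex1I[of _ v])
      have A: "Comp C (Comp C (cSX n y) p1) v = d n y" if y: "y \<in> S n" for n y
        using cat_assoc[OF C v(1) p1 cSXh[OF y]] v(2) v1(2)[OF y] by simp
      have B: "Comp C (Comp C (cTY n y) p2) v = dY n y" if y: "y \<in> Simp T n" for n y
        using cat_assoc[OF C v(1) p2 cTYh[OF y]] v(3) v2(2)[OF y] by simp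
      show "v \<in> hom C U P \<and> (\<forall>n. \<forall>y\<in>S n. Comp C (Comp C (cSX n y) p1) v = d n y) \<and>
            (\<forall>n. \<forall>y\<in>Simp T n. Comp C (Comp C (cTY n y) p2) v = dY n y)"
        using v(1) A B by simp
    next
      fix w assume w: "w \<in> hom C U P \<and> (\<forall>n. \<forall>y\<in>S n. Comp C (Comp C (cSX n y) p1) w = d n y) \<and>
            (\<forall>n. \<forall>y\<in>Simp T n. Comp C (Comp C (cTY n y) p2) w = dY n y)"
      then have wh: "w \<in> hom C U P" by simp
      have w1: "Comp C p1 w = v1"
      proof (rule Map_uniq[OF C X MSX cat_comp[OF C wh p1] v1(1)])
        fix n y assume "y \<in> Simp (subsset T S) n"
        then have y: "y \<in> S n" by simp
        show "Comp C (cSX n y) (Comp C p1 w) = Comp C (cSX n y) v1"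
          using cat_assoc[OF C wh p1 cSXh[OF y]] w v1(2)[OF y] y by simp
      qed
      have w2: "Comp C p2 w = v2"
      proof (rule Map_uniq[OF C Y MTY cat_comp[OF C wh p2] v2(1)])
        fix n y assume y: "y \<in> Simp T n"
        show "Comp C (cTY n y) (Comp C p2 w) = Comp C (cTY n y) v2"
          using cat_assoc[OF C wh p2 cTYh[OF y]] w v2(2)[OF y] y by simp
      qed
      show "w = v" by (rule pullback_uniq[OF C pb wh v(1)]) (use w1 w2 v in simp_all)
    qed
  qed
qed




lemma glue2:
  assumes C: "is_category C" and fs: "is_smorph C X Y f" and T: "is_sset T" and F: "is_subcomplex T F"
    and hp: "horn_pushout T F F' n i x"
    and R: "relrep C T X Y f F M e eY"
    and MHX: "is_Map C (subsset (Delta n) (horn n i)) X LHX cHX"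
    and rX: "rX \<in> hom C (Ob X n) LHX" and rXr: "\<And>m \<theta>. \<theta> \<in> horn n i m \<Longrightarrow> Comp C (cHX m \<theta>) rX = Opm X n \<theta>"
    and q1: "q1 \<in> hom C RR LHX" and q2: "q2 \<in> hom C RR (Ob Y n)"
    and pbR: "is_pullback C aH bH RR q1 q2"
    and hX: "hX \<in> hom C (Ob X n) RR" and hX1: "Comp C q1 hX = rX" and hX2: "Comp C q2 hX = f n"
    and rM: "rM \<in> hom C M LHX" and rMr: "\<And>m \<theta>. \<theta> \<in> horn n i m \<Longrightarrow> Comp C (cHX m \<theta>) rM = e m (Act T n \<theta> x)"
    and r: "r \<in> hom C M RR" and r1: "Comp C q1 r = rM" and r2: "Comp C q2 r = eY n x"
    and pb: "is_pullback C hX r P p1 p2"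
  shows "relrep C T X Y f F' P (glue C X T F n i x (\<lambda>m y. Comp C (e m y) p2) p1) (\<lambda>m y. Comp C (eY m y) p2)"
proof -
  have X: "is_sobj C X" and Y: "is_sobj C Y" using smorph_D[OF fs] by auto
  have Dh: "Dom C hX = Ob X n" and Dr: "Dom C r = M" using hX r by (auto simp: hom_def)
  have p1: "p1 \<in> hom C P (Ob X n)" and p2: "p2 \<in> hom C P M" and pc: "Comp C hX p1 = Comp C r p2"
    and P: "P \<in> Obj C"
    using pullback_D(4-7)[OF pb] Dh Dr by auto
  have cHh: "cHX m \<theta> \<in> hom C LHX (Ob X m)" if "\<theta> \<in> horn n i m" for m \<theta>
    using scone_D(2)[OF Map_D1[OF MHX], of \<theta> m] that by simp
  have eh: "e m y \<in> hom C M (Ob X m)" if "y \<in> F m" for m y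
    using scone_D(2)[OF relrep_D(2)[OF R], of y m] that by simp
  have xT: "x \<in> Simp T n" using hp_D(1)[OF hp] .
  have eYh: "eY m y \<in> hom C M (Ob Y m)" if "y \<in> Simp T m" for m y
    using scone_D(2)[OF relrep_D(3)[OF R] that] .
  have FF: "\<And>m. F m \<subseteq> F' m" using F_sub_F'[OF hp] .
  have hg: "Comp C (Opm X n \<theta>) p1 = Comp C (e m (Act T n \<theta> x)) p2" if t: "\<theta> \<in> horn n i m" for m \<theta>
  proof -
    have "Comp C (Opm X n \<theta>) p1 = Comp C (Comp C (cHX m \<theta>) (Comp C q1 hX)) p1" using rXr[OF t] hX1 by simp
    also have "\<dots> = Comp C (cHX m \<theta>) (Comp C q1 (Comp C hX p1))"
      using cat_assoc[OF C hX q1 cHh[OF t]] cat_assoc[OF C p1 hX q1] cat_assoc[OF C p1 cat_comp[OF C hX q1] cHh[OF t]]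
      by simp
    also have "\<dots> = Comp C (cHX m \<theta>) (Comp C q1 (Comp C r p2))" using pc by simp
    also have "\<dots> = Comp C (Comp C (cHX m \<theta>) (Comp C q1 r)) p2"
      using cat_assoc[OF C r q1 cHh[OF t]] cat_assoc[OF C p2 r q1] cat_assoc[OF C p2 cat_comp[OF C r q1] cHh[OF t]]
      by simp
    also have "\<dots> = Comp C (e m (Act T n \<theta> x)) p2" using rMr[OF t] r1 by simp
    finally show ?thesis .
  qed
  define d where "d = (\<lambda>m y. Comp C (e m y) p2)"
  have ds: "is_scone C (subsset T F) X P d" unfolding d_def by (rule scone_comp[OF C X relrep_D(2)[OF R] p2])
  have hg': "\<And>m \<theta>. \<theta> \<in> horn n i m \<Longrightarrow> Comp C (Opm X n \<theta>) p1 = d m (Act T n \<theta> x)"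
    using hg by (simp add: d_def)
  note gs = glue_scone[OF C X T F hp ds p1 hg']
  have eYn: "Comp C (f n) p1 = Comp C (eY n x) p2"
  proof -
    have "Comp C (f n) p1 = Comp C (Comp C q2 hX) p1" using hX2 by simp
    also have "\<dots> = Comp C q2 (Comp C hX p1)" using cat_assoc[OF C p1 hX q2] by simp
    also have "\<dots> = Comp C q2 (Comp C r p2)" using pc by simp
    also have "\<dots> = Comp C (Comp C q2 r) p2" using cat_assoc[OF C p2 r q2] by simp
    finally show ?thesis using r2 by simp
  qed
  show ?thesis
    unfolding d_def[symmetric]
  proof (rule relrepI)
    show "P \<in> Obj C" using P .
    show "is_scone C (subsset T F') X P (glue C X T F n i x d p1)" using gs .
    show "is_scone C T Y P (\<lambda>m y. Comp C (eY m y) p2)" using scone_comp[OF C Y relrep_D(3)[OF R] p2] .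
  next
    fix m y assume y: "y \<in> F' m"
    show "Comp C (f m) (glue C X T F n i x d p1 m y) = Comp C (eY m y) p2"
    proof (cases "y \<in> F m")
      case True
      have "Comp C (f m) (glue C X T F n i x d p1 m y) = Comp C (f m) (Comp C (e m y) p2)"
        using True by (simp add: glue_F d_def)
      also have "\<dots> = Comp C (Comp C (f m) (e m y)) p2"
        using cat_assoc[OF C p2 eh[OF True] smorph_D(3)[OF fs]] by simp
      also have "\<dots> = Comp C (eY m y) p2" using relrep_D(4)[OF R True] by simp
      finally show ?thesis .
    next
      case False
      then obtain \<theta> where t: "simp_op m n \<theta>" "y = Act T n \<theta> x" using F'_cases[OF hp y] by blast
      have oX: "Opm X n \<theta> \<in> hom C (Ob X n) (Ob X m)" using sobj_D(2)[OF X t(1)] .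
      have oY: "Opm Y n \<theta> \<in> hom C (Ob Y n) (Ob Y m)" using sobj_D(2)[OF Y t(1)] .
      have "Comp C (f m) (glue C X T F n i x d p1 m y) = Comp C (f m) (Comp C (Opm X n \<theta>) p1)"
        using glue_act[OF hp t(1) hg'] t(2) by simp
      also have "\<dots> = Comp C (Comp C (f m) (Opm X n \<theta>)) p1"
        using cat_assoc[OF C p1 oX smorph_D(3)[OF fs]] by simp
      also have "\<dots> = Comp C (Comp C (Opm Y n \<theta>) (f n)) p1" using smorph_D(4)[OF fs t(1)] by simp
      also have "\<dots> = Comp C (Opm Y n \<theta>) (Comp C (f n) p1)"
        using cat_assoc[OF C p1 smorph_D(3)[OF fs] oY] by simp
      also have "\<dots> = Comp C (Opm Y n \<theta>) (Comp C (eY n x) p2)" using eYn by simp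
      also have "\<dots> = Comp C (Comp C (Opm Y n \<theta>) (eY n x)) p2"
        using cat_assoc[OF C p2 eYh[OF xT] oY] by simp
      also have "\<dots> = Comp C (eY m y) p2"
        using scone_D(3)[OF relrep_D(3)[OF R] t(1) xT] t(2) by simp
      finally show ?thesis .
    qed
  next
    fix U d' dY assume d': "is_scone C (subsset T F') X U d'" and dY: "is_scone C T Y U dY"
      and cp: "\<forall>n. \<forall>y\<in>F' n. Comp C (f n) (d' n y) = dY n y"
    have U: "U \<in> Obj C" using scone_D(1)[OF d'] .
    have dF: "is_scone C (subsset T F) X U d'" using scone_mono[OF d' F FF] .
    have cpF: "\<And>n y. y \<in> F n \<Longrightarrow> Comp C (f n) (d' n y) = dY n y" using cp FF by blast
    obtain v1 where v1: "v1 \<in> hom C U M" "\<And>m y. y \<in> F m \<Longrightarrow> Comp C (e m y) v1 = d' m y"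
      "\<And>m y. y \<in> Simp T m \<Longrightarrow> Comp C (eY m y) v1 = dY m y"
      using relrep_ex[OF R dF dY cpF] by blast
    have xF': "x \<in> F' n" using x_in_F'(1)[OF T hp] .
    have g: "d' n x \<in> hom C U (Ob X n)" using scone_D(2)[OF d', of x n] xF' by simp
    have dact: "Comp C (Opm X n \<theta>) (d' n x) = d' m (Act T n \<theta> x)" if "simp_op m n \<theta>" for m \<theta>
      using scone_D(3)[OF d' that, of x] xF' by simp
    have eq1: "Comp C rX (d' n x) = Comp C rM v1"
    proof (rule Map_uniq[OF C X MHX cat_comp[OF C g rX] cat_comp[OF C v1(1) rM]])
      fix m \<theta> assume "\<theta> \<in> Simp (subsset (Delta n) (horn n i)) m"
      then have t: "\<theta> \<in> horn n i m" by simp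
      have s: "simp_op m n \<theta>" using t by (simp add: horn_def)
      have "Comp C (cHX m \<theta>) (Comp C rX (d' n x)) = Comp C (Comp C (cHX m \<theta>) rX) (d' n x)"
        using cat_assoc[OF C g rX cHh[OF t]] by simp
      also have "\<dots> = d' m (Act T n \<theta> x)" using rXr[OF t] dact[OF s] by simp
      also have "\<dots> = Comp C (e m (Act T n \<theta> x)) v1" using v1(2)[OF hp_D(2)[OF hp t]] by simp
      also have "\<dots> = Comp C (Comp C (cHX m \<theta>) rM) v1" using rMr[OF t] by simp
      also have "\<dots> = Comp C (cHX m \<theta>) (Comp C rM v1)" using cat_assoc[OF C v1(1) rM cHh[OF t]] by simp
      finally show "Comp C (cHX m \<theta>) (Comp C rX (d' n x)) = Comp C (cHX m \<theta>) (Comp C rM v1)" .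
    qed
    have eq: "Comp C hX (d' n x) = Comp C r v1"
    proof (rule pullback_uniq[OF C pbR cat_comp[OF C g hX] cat_comp[OF C v1(1) r]])
      show "Comp C q1 (Comp C hX (d' n x)) = Comp C q1 (Comp C r v1)"
        using cat_assoc[OF C g hX q1] cat_assoc[OF C v1(1) r q1] hX1 r1 eq1 by simp
      have "Comp C q2 (Comp C hX (d' n x)) = dY n x"
        using cat_assoc[OF C g hX q2] hX2 cp xF' by simp
      moreover have "Comp C q2 (Comp C r v1) = dY n x"
        using cat_assoc[OF C v1(1) r q2] r2 v1(3)[OF xT] by simp
      ultimately show "Comp C q2 (Comp C hX (d' n x)) = Comp C q2 (Comp C r v1)" by simp
    qed
    obtain v where v: "v \<in> hom C U P" "Comp C p1 v = d' n x" "Comp C p2 v = v1"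
      using pullback_univ[OF pb U] g v1(1) eq Dh Dr by metis
    have gl: "Comp C (glue C X T F n i x d p1 m y) v = d' m y" if y: "y \<in> F' m" for m y
    proof (cases "y \<in> F m")
      case True
      have "Comp C (glue C X T F n i x d p1 m y) v = Comp C (Comp C (e m y) p2) v"
        using True by (simp add: glue_F d_def)
      also have "\<dots> = Comp C (e m y) (Comp C p2 v)" using cat_assoc[OF C v(1) p2 eh[OF True]] by simp
      also have "\<dots> = d' m y" using v(3) v1(2)[OF True] by simp
      finally show ?thesis .
    next
      case False
      then obtain \<theta> where t: "simp_op m n \<theta>" "y = Act T n \<theta> x" using F'_cases[OF hp y] by blast
      have "Comp C (glue C X T F n i x d p1 m y) v = Comp C (Comp C (Opm X n \<theta>) p1) v"
        using glue_act[OF hp t(1) hg'] t(2) by simp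
      also have "\<dots> = Comp C (Opm X n \<theta>) (Comp C p1 v)"
        using cat_assoc[OF C v(1) p1 sobj_D(2)[OF X t(1)]] by simp
      also have "\<dots> = d' m y" using v(2) dact[OF t(1)] t(2) by simp
      finally show ?thesis .
    qed
    have gY: "Comp C (Comp C (eY m y) p2) v = dY m y" if y: "y \<in> Simp T m" for m y
      using cat_assoc[OF C v(1) p2 eYh[OF y]] v(3) v1(3)[OF y] by simp
    show "\<exists>!u. u \<in> hom C U P \<and> (\<forall>m. \<forall>y\<in>F' m. Comp C (glue C X T F n i x d p1 m y) u = d' m y) \<and>
            (\<forall>m. \<forall>y\<in>Simp T m. Comp C (Comp C (eY m y) p2) u = dY m y)"
    proof (rule ex1I[of _ v])
      show "v \<in> hom C U P \<and> (\<forall>m. \<forall>y\<in>F' m. Comp C (glue C X T F n i x d p1 m y) v = d' m y) \<and>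
            (\<forall>m. \<forall>y\<in>Simp T m. Comp C (Comp C (eY m y) p2) v = dY m y)"
        using v(1) gl gY by simp
    next
      fix w assume w: "w \<in> hom C U P \<and> (\<forall>m. \<forall>y\<in>F' m. Comp C (glue C X T F n i x d p1 m y) w = d' m y) \<and>
            (\<forall>m. \<forall>y\<in>Simp T m. Comp C (Comp C (eY m y) p2) w = dY m y)"
      then have wh: "w \<in> hom C U P" and wg: "\<And>m y. y \<in> F' m \<Longrightarrow> Comp C (glue C X T F n i x d p1 m y) w = d' m y"
        and wY: "\<And>m y. y \<in> Simp T m \<Longrightarrow> Comp C (Comp C (eY m y) p2) w = dY m y"
        by auto
      have a: "Comp C p2 w = v1"
      proof (rule relrep_uniq[OF C fs R cat_comp[OF C wh p2] v1(1)])
        fix m y assume yF: "y \<in> F m"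
        have "Comp C (e m y) (Comp C p2 w) = Comp C (Comp C (e m y) p2) w"
          using cat_assoc[OF C wh p2 eh[OF yF]] by simp
        also have "\<dots> = d' m y" using wg[of y m] yF FF by (auto simp: glue_F d_def)
        finally show "Comp C (e m y) (Comp C p2 w) = Comp C (e m y) v1" using v1(2)[OF yF] by simp
      next
        fix m y assume yT: "y \<in> Simp T m"
        show "Comp C (eY m y) (Comp C p2 w) = Comp C (eY m y) v1"
          using cat_assoc[OF C wh p2 eYh[OF yT]] wY[OF yT] v1(3)[OF yT] by simp
      qed
      have gx: "glue C X T F n i x d p1 n x = p1"
        using glue_act[OF hp simp_op_id hg'] x_in_F'(2)[OF T hp] sobj_D(3)[OF X] cat_idl[OF C p1]
        by (simp del: upt_Suc)
      have b: "Comp C p1 w = d' n x" using wg[OF xF'] gx by simp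
      show "w = v" by (rule pullback_uniq[OF C pb wh v(1)]) (use a b v in simp_all)
    qed
  qed
qed




lemma part2:
  assumes D: "descent_category C cov" and T: "is_sset T" and E: "m_expansion T m S"
    and GX: "k_groupoid C cov k X" and GY: "k_groupoid C cov k Y" and fib: "fibration C cov X Y f"
    and MTX: "is_Map C T X LTX cTX" and MSX: "is_Map C (subsset T S) X LSX cSX"
    and MSY: "is_Map C (subsset T S) Y LSY cSY" and MTY: "is_Map C T Y LTY cTY"
  shows "relmap_prop C (\<lambda>u. u \<in> cov \<and> (k < m \<longrightarrow> is_iso C u)) T S f
              LTX cTX LSX cSX LSY cSY LTY cTY"
  unfolding relmap_prop_def
proof (intro allI impI, elim conjE)
  fix a b P0 p1 p2 u
  assume a: "a \<in> hom C LSX LSY" and ap: "is_push C S f cSX cSY a"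
    and b: "b \<in> hom C LTY LSY" and br: "is_restr C S cTY cSY b"
    and pb0: "is_pullback C a b P0 p1 p2"
    and u: "u \<in> hom C LTX P0" and u1: "is_restr C S cTX cSX (Comp C p1 u)"
    and u2: "is_push C (Simp T) f cTX cTY (Comp C p2 u)"
  have C: "is_category C" using desc_cat[OF D] .
  have Lim: "has_finite_limits C" using desc_lim[OF D] .
  have fs: "is_smorph C X Y f" using fib_D(1)[OF fib] .
  have X: "is_sobj C X" and Y: "is_sobj C Y" using smorph_D[OF fs] by auto
  have E0: "0 < m" and ES: "is_subcomplex T S" using mexp_D[OF E] by simp_all
  obtain N F nn ii xs where big: "F 0 = S \<and> F N = Simp T \<and>
        (\<forall>l \<le> N. is_subcomplex T (F l)) \<and>
        (\<forall>l < N. m \<le> nn l \<and> ii l \<le> nn l \<and> (\<forall>l'. l \<le> l' \<and> l' < N \<longrightarrow> nn l \<le> nn l') \<and>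
                 horn_pushout T (F l) (F (Suc l)) (nn l) (ii l) (xs l))"
    using mexp_D(3)[OF E] by (elim exE) (erule that)
  have F0: "F 0 = S" and FN: "F N = Simp T"
    and Fsub': "\<forall>l \<le> N. is_subcomplex T (F l)"
    and Fst': "\<forall>l < N. m \<le> nn l \<and> ii l \<le> nn l \<and> horn_pushout T (F l) (F (Suc l)) (nn l) (ii l) (xs l)"
    using big by simp_all
  have Fsub: "\<And>l. l \<le> N \<Longrightarrow> is_subcomplex T (F l)" using Fsub' by simp
  have Fst: "\<And>l. l < N \<Longrightarrow> m \<le> nn l \<and> ii l \<le> nn l \<and> horn_pushout T (F l) (F (Suc l)) (nn l) (ii l) (xs l)"
    using Fst' by simp
  define e0 where "e0 = (\<lambda>j y. Comp C (cSX j y) p1)"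
  define eY0 where "eY0 = (\<lambda>j y. Comp C (cTY j y) p2)"
  have R0: "relrep C T X Y f S P0 e0 eY0"
    unfolding e0_def eY0_def by (rule rel_base[OF C fs ES MSX MSY MTY a ap b br pb0])
  have e0h: "e0 j y \<in> hom C P0 (Ob X j)" if "y \<in> S j" for j y
    using scone_D(2)[OF relrep_D(2)[OF R0], of y j] that by simp
  have eY0h: "eY0 j y \<in> hom C P0 (Ob Y j)" if "y \<in> Simp T j" for j y
    using scone_D(2)[OF relrep_D(3)[OF R0] that] .
  have claim: "\<exists>M e eY q. relrep C T X Y f (F l) M e eY \<and> q \<in> hom C M P0 \<and>
      (\<forall>j. \<forall>y\<in>S j. Comp C (e0 j y) q = e j y) \<and> (\<forall>j. \<forall>y\<in>Simp T j. Comp C (eY0 j y) q = eY j y) \<and>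
      q \<in> cov \<and> (k < m \<longrightarrow> is_iso C q) \<and> (\<forall>j. S j \<subseteq> F l j)" if "l \<le> N" for l
    using that
  proof (induction l)
    case 0
    have P0: "P0 \<in> Obj C" using relrep_D(1)[OF R0] .
    show ?case
    proof (intro exI conjI)
      show "relrep C T X Y f (F 0) P0 e0 eY0" using R0 F0 by simp
      show "Idm C P0 \<in> hom C P0 P0" using cat_id[OF C P0] .
      show "\<forall>j. \<forall>y\<in>S j. Comp C (e0 j y) (Idm C P0) = e0 j y" using cat_idr[OF C e0h] by simp
      show "\<forall>j. \<forall>y\<in>Simp T j. Comp C (eY0 j y) (Idm C P0) = eY0 j y" using cat_idr[OF C eY0h] by simp
      show "Idm C P0 \<in> cov" using desc_id[OF D P0] .
      show "k < m \<longrightarrow> is_iso C (Idm C P0)" using id_iso[OF C P0] by simp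
      show "\<forall>j. S j \<subseteq> F 0 j" using F0 by simp
    qed
  next
    case (Suc l)
    then have lN: "l < N" by simp
    obtain M e eY q where IH: "relrep C T X Y f (F l) M e eY" "q \<in> hom C M P0"
      "\<And>j y. y \<in> S j \<Longrightarrow> Comp C (e0 j y) q = e j y"
      "\<And>j y. y \<in> Simp T j \<Longrightarrow> Comp C (eY0 j y) q = eY j y" "q \<in> cov" "k < m \<longrightarrow> is_iso C q"
      "\<And>j. S j \<subseteq> F l j"
      using Suc.IH lN by auto
    define n where "n = nn l"
    define i where "i = ii l"
    define x where "x = xs l"
    have mn: "m \<le> n" and iN: "i \<le> n" and hp: "horn_pushout T (F l) (F (Suc l)) n i x"
      using Fst[OF lN] by (simp_all add: n_def i_def x_def)
    have n0: "0 < n" using E0 mn by simp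
    have Fl: "is_subcomplex T (F l)" using Fsub lN by simp
    have xT: "x \<in> Simp T n" using hp_D(1)[OF hp] .
    obtain LHX cHX where MHX: "is_Map C (subsset (Delta n) (horn n i)) X LHX cHX"
      using Map_Delta_exists[OF C Lim X horn_sub] by blast
    obtain LHY cHY where MHY: "is_Map C (subsset (Delta n) (horn n i)) Y LHY cHY"
      using Map_Delta_exists[OF C Lim Y horn_sub] by blast
    have cHXh: "cHX j \<theta> \<in> hom C LHX (Ob X j)" if "\<theta> \<in> horn n i j" for j \<theta>
      using scone_D(2)[OF Map_D1[OF MHX], of \<theta> j] that by simp
    have cHYh: "cHY j \<theta> \<in> hom C LHY (Ob Y j)" if "\<theta> \<in> horn n i j" for j \<theta>
      using scone_D(2)[OF Map_D1[OF MHY], of \<theta> j] that by simp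
    have hs: "\<And>j \<theta>. \<theta> \<in> horn n i j \<Longrightarrow> simp_op j n \<theta>" by (simp add: horn_def)
    obtain rX where rX: "rX \<in> hom C (Ob X n) LHX" "\<And>j \<theta>. \<theta> \<in> horn n i j \<Longrightarrow> Comp C (cHX j \<theta>) rX = Opm X n \<theta>"
      using Map_ex[OF MHX opm_scone[OF C X horn_sub]] by auto
    obtain bH where bH: "bH \<in> hom C (Ob Y n) LHY" "\<And>j \<theta>. \<theta> \<in> horn n i j \<Longrightarrow> Comp C (cHY j \<theta>) bH = Opm Y n \<theta>"
      using Map_ex[OF MHY opm_scone[OF C Y horn_sub]] by auto
    obtain aH where aH: "aH \<in> hom C LHX LHY"
      "\<And>j \<theta>. \<theta> \<in> horn n i j \<Longrightarrow> Comp C (cHY j \<theta>) aH = Comp C (f j) (cHX j \<theta>)"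
      using Map_ex[OF MHY push_scone[OF C fs Map_D1[OF MHX]]] by auto
    have rXc: "rX \<in> cov \<and> (k < n \<longrightarrow> is_iso C rX)"
      by (rule kg_D[OF GX n0 iN MHX rX(1)]) (use rX(2) in \<open>auto simp: is_restr_def\<close>)
    have bHc: "bH \<in> cov \<and> (k < n \<longrightarrow> is_iso C bH)"
      by (rule kg_D[OF GY n0 iN MHY bH(1)]) (use bH(2) in \<open>auto simp: is_restr_def\<close>)
    have hmR: "aH \<in> Mor C" "bH \<in> Mor C" "Cod C aH = Cod C bH" using aH(1) bH(1) by (auto simp: hom_def)
    obtain RR q1 q2 where pbR: "is_pullback C aH bH RR q1 q2"
      using pullback_exists[OF C Lim hmR] by blast
    have q1: "q1 \<in> hom C RR LHX" and q2: "q2 \<in> hom C RR (Ob Y n)" and RR: "RR \<in> Obj C"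
      using pullback_D(4-6)[OF pbR] aH(1) bH(1) by (auto simp: hom_def)
    have fn: "f n \<in> hom C (Ob X n) (Ob Y n)" using smorph_D(3)[OF fs] .
    have eqX: "Comp C aH rX = Comp C bH (f n)"
    proof (rule Map_uniq[OF C Y MHY cat_comp[OF C rX(1) aH(1)] cat_comp[OF C fn bH(1)]])
      fix j \<theta> assume "\<theta> \<in> Simp (subsset (Delta n) (horn n i)) j"
      then have t: "\<theta> \<in> horn n i j" by simp
      have "Comp C (cHY j \<theta>) (Comp C aH rX) = Comp C (Comp C (f j) (cHX j \<theta>)) rX"
        using cat_assoc[OF C rX(1) aH(1) cHYh[OF t]] aH(2)[OF t] by simp
      also have "\<dots> = Comp C (f j) (Opm X n \<theta>)"
        using cat_assoc[OF C rX(1) cHXh[OF t] smorph_D(3)[OF fs]] rX(2)[OF t] by simp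
      also have "\<dots> = Comp C (Opm Y n \<theta>) (f n)" using smorph_D(4)[OF fs hs[OF t]] .
      also have "\<dots> = Comp C (cHY j \<theta>) (Comp C bH (f n))"
        using cat_assoc[OF C fn bH(1) cHYh[OF t]] bH(2)[OF t] by simp
      finally show "Comp C (cHY j \<theta>) (Comp C aH rX) = Comp C (cHY j \<theta>) (Comp C bH (f n))" .
    qed
    obtain hX where hX: "hX \<in> hom C (Ob X n) RR" "Comp C q1 hX = rX" "Comp C q2 hX = f n"
      using pullback_univ[OF pbR sobj_D(1)[OF X]] rX(1) fn eqX aH(1) bH(1) by (metis homD)
    have hXc: "hX \<in> cov"
    proof -
      have "relmap_prop C (\<lambda>u. u \<in> cov) (Delta n) (horn n i) f
          (Ob X n) (\<lambda>m \<theta>. Opm X n \<theta>) LHX cHX LHY cHY (Ob Y n) (\<lambda>m \<theta>. Opm Y n \<theta>)"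
        using fib_D(2)[OF fib n0 iN MHX MHY] .
      moreover have "is_push C (horn n i) f cHX cHY aH" using aH(2) by (simp add: is_push_def)
      moreover have "is_restr C (horn n i) (\<lambda>m \<theta>. Opm Y n \<theta>) cHY bH" using bH(2) by (simp add: is_restr_def)
      moreover have "is_restr C (horn n i) (\<lambda>m \<theta>. Opm X n \<theta>) cHX (Comp C q1 hX)"
        using rX(2) hX(2) by (simp add: is_restr_def)
      moreover have "is_push C (Simp (Delta n)) f (\<lambda>m \<theta>. Opm X n \<theta>) (\<lambda>m \<theta>. Opm Y n \<theta>) (Comp C q2 hX)"
        using smorph_D(4)[OF fs] hX(3) by (simp add: is_push_def)
      ultimately show ?thesis using relmap_D[OF _ aH(1) _ bH(1) _ pbR hX(1)] by blast
    qed
    have hXi: "k < n \<longrightarrow> is_iso C hX"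
    proof
      assume kn: "k < n"
      have "is_iso C q1" using pullback_iso[OF C pullback_sym[OF C pbR]] bHc kn by simp
      then show "is_iso C hX" using iso_cancel[OF C hX(1) q1] hX(2) rXc kn by simp
    qed
    have R: "relrep C T X Y f (F l) M e eY" using IH(1) .
    have Mo: "M \<in> Obj C" using relrep_D(1)[OF R] .
    obtain rM where rM: "rM \<in> hom C M LHX" "\<And>j \<theta>. \<theta> \<in> horn n i j \<Longrightarrow> Comp C (cHX j \<theta>) rM = e j (Act T n \<theta> x)"
      using Map_ex[OF MHX act_scone[OF T relrep_D(2)[OF R] xT horn_sub hp_D(2)[OF hp]]] by auto
    have eYh: "eY j y \<in> hom C M (Ob Y j)" if "y \<in> Simp T j" for j y
      using scone_D(2)[OF relrep_D(3)[OF R] that] .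
    have eh: "e j y \<in> hom C M (Ob X j)" if "y \<in> F l j" for j y
      using scone_D(2)[OF relrep_D(2)[OF R], of y j] that by simp
    have eqM: "Comp C aH rM = Comp C bH (eY n x)"
    proof (rule Map_uniq[OF C Y MHY cat_comp[OF C rM(1) aH(1)] cat_comp[OF C eYh[OF xT] bH(1)]])
      fix j \<theta> assume "\<theta> \<in> Simp (subsset (Delta n) (horn n i)) j"
      then have t: "\<theta> \<in> horn n i j" by simp
      have aF: "Act T n \<theta> x \<in> F l j" using hp_D(2)[OF hp t] .
      have "Comp C (cHY j \<theta>) (Comp C aH rM) = Comp C (Comp C (f j) (cHX j \<theta>)) rM"
        using cat_assoc[OF C rM(1) aH(1) cHYh[OF t]] aH(2)[OF t] by simp
      also have "\<dots> = Comp C (f j) (e j (Act T n \<theta> x))"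
        using cat_assoc[OF C rM(1) cHXh[OF t] smorph_D(3)[OF fs]] rM(2)[OF t] by simp
      also have "\<dots> = eY j (Act T n \<theta> x)" using relrep_D(4)[OF R aF] .
      also have "\<dots> = Comp C (Opm Y n \<theta>) (eY n x)" using scone_D(3)[OF relrep_D(3)[OF R] hs[OF t] xT] by simp
      also have "\<dots> = Comp C (cHY j \<theta>) (Comp C bH (eY n x))"
        using cat_assoc[OF C eYh[OF xT] bH(1) cHYh[OF t]] bH(2)[OF t] by simp
      finally show "Comp C (cHY j \<theta>) (Comp C aH rM) = Comp C (cHY j \<theta>) (Comp C bH (eY n x))" .
    qed
    obtain r where r: "r \<in> hom C M RR" "Comp C q1 r = rM" "Comp C q2 r = eY n x"
      using pullback_univ[OF pbR Mo] rM(1) eYh[OF xT] eqM aH(1) bH(1) by (metis homD)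
    have hmP: "hX \<in> Mor C" "r \<in> Mor C" "Cod C hX = Cod C r" using hX(1) r(1) by (auto simp: hom_def)
    obtain P pp1 pp2 where pb: "is_pullback C hX r P pp1 pp2"
      using pullback_exists[OF C Lim hmP] by blast
    have RP: "relrep C T X Y f (F (Suc l)) P (glue C X T (F l) n i x (\<lambda>j y. Comp C (e j y) pp2) pp1)
        (\<lambda>j y. Comp C (eY j y) pp2)"
      by (rule glue2[OF C fs T Fl hp R MHX rX q1 q2 pbR hX rM r pb])
    have pp2: "pp2 \<in> hom C P M" using pullback_D(6)[OF pb] r(1) by (simp add: hom_def)
    have pp2c: "pp2 \<in> cov" using pullback_cov[OF D hXc pb] .
    have pp2i: "k < m \<longrightarrow> is_iso C pp2" using pullback_iso[OF C pb] hXi mn by auto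
    show ?case
    proof (intro exI conjI)
      show "relrep C T X Y f (F (Suc l)) P (glue C X T (F l) n i x (\<lambda>j y. Comp C (e j y) pp2) pp1)
        (\<lambda>j y. Comp C (eY j y) pp2)" using RP .
      show "Comp C q pp2 \<in> hom C P P0" using cat_comp[OF C pp2 IH(2)] .
      show "\<forall>j. \<forall>y\<in>S j. Comp C (e0 j y) (Comp C q pp2) = glue C X T (F l) n i x (\<lambda>j y. Comp C (e j y) pp2) pp1 j y"
      proof (intro allI ballI)
        fix j y assume y: "y \<in> S j"
        have yF: "y \<in> F l j" using IH(7)[of j] y by blast
        have "Comp C (e0 j y) (Comp C q pp2) = Comp C (Comp C (e0 j y) q) pp2"
          using cat_assoc[OF C pp2 IH(2) e0h[OF y]] by simp
        also have "\<dots> = Comp C (e j y) pp2" by (simp only: IH(3)[OF y])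
        also have "\<dots> = glue C X T (F l) n i x (\<lambda>j y. Comp C (e j y) pp2) pp1 j y"
          using glue_F[of y "F l" j C X T n i x "\<lambda>j y. Comp C (e j y) pp2" pp1] yF by simp
        finally show "Comp C (e0 j y) (Comp C q pp2) = glue C X T (F l) n i x (\<lambda>j y. Comp C (e j y) pp2) pp1 j y" .
      qed
      show "\<forall>j. \<forall>y\<in>Simp T j. Comp C (eY0 j y) (Comp C q pp2) = Comp C (eY j y) pp2"
      proof (intro allI ballI)
        fix j y assume y: "y \<in> Simp T j"
        have "Comp C (eY0 j y) (Comp C q pp2) = Comp C (Comp C (eY0 j y) q) pp2"
          using cat_assoc[OF C pp2 IH(2) eY0h[OF y]] by simp
        also have "\<dots> = Comp C (eY j y) pp2" by (simp only: IH(4)[OF y])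
        finally show "Comp C (eY0 j y) (Comp C q pp2) = Comp C (eY j y) pp2" .
      qed
      show "Comp C q pp2 \<in> cov" using cov_comp[OF D pp2c IH(5) pp2 IH(2)] .
      show "k < m \<longrightarrow> is_iso C (Comp C q pp2)" using iso_comp[OF C pp2 IH(2)] IH(6) pp2i by auto
      show "\<forall>j. S j \<subseteq> F (Suc l) j" using IH(7) F_sub_F'[OF hp] by blast
    qed
  qed
  obtain M e eY q where RM: "relrep C T X Y f (F N) M e eY" and q: "q \<in> hom C M P0"
    and qe: "\<And>j y. y \<in> S j \<Longrightarrow> Comp C (e0 j y) q = e j y"
    and qeY: "\<And>j y. y \<in> Simp T j \<Longrightarrow> Comp C (eY0 j y) q = eY j y"
    and qc: "q \<in> cov" and qi: "k < m \<longrightarrow> is_iso C q"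
    using claim[of N] by auto
  have RT: "relrep C T X Y f (Simp T) M e eY" using RM FN by simp
  have SS: "\<And>j. S j \<subseteq> Simp T j" using subcx_D(1)[OF ES] .
  have cTXh: "cTX j y \<in> hom C LTX (Ob X j)" if "y \<in> Simp T j" for j y
    using scone_D(2)[OF Map_D1[OF MTX] that] .
  have eh: "e j y \<in> hom C M (Ob X j)" if "y \<in> Simp T j" for j y
    using scone_D(2)[OF relrep_D(2)[OF RT], of y j] that by simp
  have fcs: "is_scone C T Y LTX (\<lambda>j y. Comp C (f j) (cTX j y))" using push_scone[OF C fs Map_D1[OF MTX]] .
  obtain w where w: "w \<in> hom C LTX M" "\<And>j y. y \<in> Simp T j \<Longrightarrow> Comp C (e j y) w = cTX j y"
    "\<And>j y. y \<in> Simp T j \<Longrightarrow> Comp C (eY j y) w = Comp C (f j) (cTX j y)"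
    using relrep_ex[OF RT _ fcs, of cTX] Map_D1[OF MTX] by auto
  have MTe: "is_scone C T X M e" using relrep_D(2)[OF RT] by simp
  obtain w' where w': "w' \<in> hom C M LTX" "\<And>j y. y \<in> Simp T j \<Longrightarrow> Comp C (cTX j y) w' = e j y"
    using Map_ex[OF MTX MTe] by auto
  have LTX: "LTX \<in> Obj C" and Mo: "M \<in> Obj C" using cat_obj[OF C w(1)] by auto
  have ww1: "Comp C w' w = Idm C LTX"
  proof (rule Map_uniq[OF C X MTX cat_comp[OF C w(1) w'(1)] cat_id[OF C LTX]])
    fix j y assume y: "y \<in> Simp T j"
    show "Comp C (cTX j y) (Comp C w' w) = Comp C (cTX j y) (Idm C LTX)"
      using cat_assoc[OF C w(1) w'(1) cTXh[OF y]] w'(2)[OF y] w(2)[OF y] cat_idr[OF C cTXh[OF y]] by simp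
  qed
  have ww2: "Comp C w w' = Idm C M"
  proof (rule relrep_uniq[OF C fs RT cat_comp[OF C w'(1) w(1)] cat_id[OF C Mo]])
    fix j y assume y: "y \<in> Simp T j"
    show "Comp C (e j y) (Comp C w w') = Comp C (e j y) (Idm C M)"
      using cat_assoc[OF C w'(1) w(1) eh[OF y]] w(2)[OF y] w'(2)[OF y] cat_idr[OF C eh[OF y]] by simp
    have eYh: "eY j y \<in> hom C M (Ob Y j)" using scone_D(2)[OF relrep_D(3)[OF RT] y] .
    have "Comp C (eY j y) (Comp C w w') = Comp C (Comp C (f j) (cTX j y)) w'"
      using cat_assoc[OF C w'(1) w(1) eYh] w(3)[OF y] by simp
    also have "\<dots> = Comp C (f j) (e j y)"
      using cat_assoc[OF C w'(1) cTXh[OF y] smorph_D(3)[OF fs]] w'(2)[OF y] by simp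
    also have "\<dots> = eY j y" using relrep_D(4)[OF RT y] .
    finally show "Comp C (eY j y) (Comp C w w') = Comp C (eY j y) (Idm C M)"
      using cat_idr[OF C eYh] by simp
  qed
  have wi: "is_iso C w" by (rule isoI[OF w(1) w'(1) ww1 ww2])
  have uu: "u = Comp C q w"
  proof (rule relrep_uniq[OF C fs R0 u cat_comp[OF C w(1) q]])
    fix j y assume y: "y \<in> S j"
    have yT: "y \<in> Simp T j" using SS[of j] y by blast
    have p1h: "p1 \<in> hom C P0 LSX" using pullback_D(5)[OF pb0] a by (simp add: hom_def)
    have cS: "cSX j y \<in> hom C LSX (Ob X j)" using scone_D(2)[OF Map_D1[OF MSX], of y j] y by simp
    have "Comp C (e0 j y) u = Comp C (cSX j y) (Comp C p1 u)"
      using cat_assoc[OF C u p1h cS] by (simp add: e0_def)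
    also have "\<dots> = cTX j y" using u1 y by (simp add: is_restr_def)
    finally have "Comp C (e0 j y) u = cTX j y" .
    moreover have "Comp C (e0 j y) (Comp C q w) = cTX j y"
      using cat_assoc[OF C w(1) q e0h[OF y]] qe[OF y] w(2)[OF yT] by simp
    ultimately show "Comp C (e0 j y) u = Comp C (e0 j y) (Comp C q w)" by simp
  next
    fix j y assume y: "y \<in> Simp T j"
    have p2h: "p2 \<in> hom C P0 LTY" using pullback_D(6)[OF pb0] b by (simp add: hom_def)
    have cT: "cTY j y \<in> hom C LTY (Ob Y j)" using scone_D(2)[OF Map_D1[OF MTY] y] .
    have "Comp C (eY0 j y) u = Comp C (cTY j y) (Comp C p2 u)"
      using cat_assoc[OF C u p2h cT] by (simp add: eY0_def)
    also have "\<dots> = Comp C (f j) (cTX j y)" using u2 y by (simp add: is_push_def)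
    finally have "Comp C (eY0 j y) u = Comp C (f j) (cTX j y)" .
    moreover have "Comp C (eY0 j y) (Comp C q w) = Comp C (f j) (cTX j y)"
      using cat_assoc[OF C w(1) q eY0h[OF y]] qeY[OF y] w(3)[OF y] by simp
    ultimately show "Comp C (eY0 j y) u = Comp C (eY0 j y) (Comp C q w)" by simp
  qed
  show "u \<in> cov \<and> (k < m \<longrightarrow> is_iso C u)"
    using uu cov_comp[OF D iso_cov[OF D w(1) wi] qc w(1) q] iso_comp[OF C w(1) q wi] qi by auto
qed


theorem lemma3p9:
  fixes C :: "('o, 'm) category" and cov :: "'m set" and k m :: nat
    and T :: "'a sset" and S :: "nat \<Rightarrow> 'a set"
  assumes "descent_category C cov"
    and "finite_sset T"
    and "m_expansion T m S"
  shows
    "(\<forall>(X :: ('o, 'm) sobj) LT cT LS cS u.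
        k_groupoid C cov k X \<and>
        is_Map C T X LT cT \<and> is_Map C (subsset T S) X LS cS \<and>
        u \<in> hom C LT LS \<and> is_restr C S cT cS u
        \<longrightarrow> u \<in> cov \<and> (k < m \<longrightarrow> is_iso C u))
   \<and>
    (\<forall>(X :: ('o, 'm) sobj) (Y :: ('o, 'm) sobj) f LTX cTX LSX cSX LSY cSY LTY cTY.
        k_groupoid C cov k X \<and> k_groupoid C cov k Y \<and> fibration C cov X Y f \<and>
        is_Map C T X LTX cTX \<and> is_Map C (subsset T S) X LSX cSX \<and>
        is_Map C (subsset T S) Y LSY cSY \<and> is_Map C T Y LTY cTY
        \<longrightarrow> relmap_prop C (\<lambda>u. u \<in> cov \<and> (k < m \<longrightarrow> is_iso C u)) T S f
              LTX cTX LSX cSX LSY cSY LTY cTY)"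
proof -
  have T: "is_sset T" using assms(2) unfolding finite_sset_def by (rule conjunct1)
  show ?thesis
  proof (rule conjI; intro allI impI)
    fix X :: "('o, 'm) sobj" and LT cT LS cS u
    assume h: "k_groupoid C cov k X \<and> is_Map C T X LT cT \<and> is_Map C (subsset T S) X LS cS \<and>
        u \<in> hom C LT LS \<and> is_restr C S cT cS u"
    then have h1: "k_groupoid C cov k X" "is_Map C T X LT cT" "is_Map C (subsset T S) X LS cS"
        "u \<in> hom C LT LS" "is_restr C S cT cS u" by simp_all
    show "u \<in> cov \<and> (k < m \<longrightarrow> is_iso C u)"
      by (rule part1[OF assms(1) T assms(3) h1])
  next
    fix X Y :: "('o, 'm) sobj" and f LTX cTX LSX cSX LSY cSY LTY cTY
    assume h: "k_groupoid C cov k X \<and> k_groupoid C cov k Y \<and> fibration C cov X Y f \<and>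
        is_Map C T X LTX cTX \<and> is_Map C (subsset T S) X LSX cSX \<and>
        is_Map C (subsset T S) Y LSY cSY \<and> is_Map C T Y LTY cTY"
    then have h1: "k_groupoid C cov k X" "k_groupoid C cov k Y" "fibration C cov X Y f"
        "is_Map C T X LTX cTX" "is_Map C (subsset T S) X LSX cSX"
        "is_Map C (subsset T S) Y LSY cSY" "is_Map C T Y LTY cTY" by simp_all
    show "relmap_prop C (\<lambda>u. u \<in> cov \<and> (k < m \<longrightarrow> is_iso C u)) T S f
              LTX cTX LSX cSX LSY cSY LTY cTY"
      by (rule part2[OF assms(1) T assms(3) h1])
  qed
qed

end
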